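(* With the notation of the context, $\rho(C_1)$ is a self-orthogonal additive code with $\rho(C_1)^\perp=\rho(C_1^\perp)$, $|\rho(C_1)|=2^{nn_2-m(n-2k)}$, $|\rho(C_1^\perp)|=2^{nn_2+m(n-2k)}$, so it defines an $[[nn_2,m(n-2k)]]$ stabilizer quantum code $Q$ (of rate $r(1-2r')$ with $r=m/n_2$, $r'=k/n$); moreover every vector of $\rho(C_1^\perp)\setminus\rho(C_1)$ has weight at least $d_2(k+1)$. Consequently the relative minimum distance $\delta$ of $Q$ satisfies $\delta\ge \frac{d_2}{n_2}\,r'$; in particular, if $d_2/n_2\ge H_4^{-1}\!\left(\frac{1-r}{2}\right)$ then $\delta\ge r'\,H_4^{-1}\!\left(\frac{1-r}{2}\right)$.
   Context: $\mathbb{F}_4=\{0,1,\omega,\omega^2\}$, $\omega^2=\omega+1$, $\bar x=x^2$; trace inner product $\langle u,v\rangle=\sum_i(u_i\bar v_i+\bar u_iv_i)\in\mathbb{F}_2$; additive codes are $\mathbb{F}_2$-subspaces of $\mathbb{F}_4^N$, $C^\perp$ is the trace dual, self-orthogonal means $C\subseteq C^\perp$; weight = number of nonzero coordinates; an $[[N,K,D]]$ stabilizer code is given by a self-orthogonal additive $C$ with $|C|=2^{N-K}$ such that all vectors of $C^\perp\setminus C$ have weight $\ge D$; relative minimum distance is $D/N$. $H_4(x)=-x\log_4\frac x3-(1-x)\log_4(1-x)$, and $H_4^{-1}$ is the inverse of its restriction to $(0,3/4]$. Outer code (quantum Reed–Solomon code): let $m\ge2$, $n=2^m-1$, and $1\le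 k\le 2^{m-1}-1$. Let $\alpha$ be a primitive element of $\mathbb{F}_{2^m}$ and $C_{\rm RS}\subseteq\mathbb{F}_{2^m}^n$ the cyclic Reed–Solomon code with generator polynomial $\prod_{i=0}^{n-k-1}(x-\alpha^i)$ (dimension $k$); its dual $C_{\rm RS}^\perp$ (standard inner product) has dimension $n-k$ and minimum distance $k+1$, and $C_{\rm RS}\subseteq C_{\rm RS}^\perp$. Fix a self-dual basis $\mathcal B=\{b_1,\dots,b_m\}$ of $\mathbb{F}_{2^m}$ over $\mathbb{F}_2$; the binary expansion of a code $D\subseteq\mathbb{F}_{2^m}^n$ is $\mathcal B(D)=\{(c_{ij})\in\mathbb{F}_2^{nm}:(\sum_j c_{ij}b_j)_i\in D\}$. Put $C_1=\omega\mathcal B(C_{\rm RS})+\bar\omega\mathcal B(C_{\rm RS})$ and $C_1^\perp=\omega\mathcal B(C_{\rm RS}^\perp)+\bar\omega\mathcal B(C_{\rm RS}^\perp)$, additive codes in $\mathbb{F}_4^{nm}$; $C_1^\perp$ is the trace dual of $C_1$. Write vectors of $\mathbb{F}_4^{nm}$ as $(v_1,\dots,v_n)$ with blocks $v_i\in\mathbb{F}_4^m$ (block $i$ = the $m$ coordinates coming from the $i$-th Reed–Solomon position). Inner code: let $C_2\subseteq C_2^\perp\subseteq\mathbb{F}_4^{n_2}$ define an $[[n_2,m,d_2]]$ stabilizer code ($|C_2|=2^{n_2-m}$). The trace inner product induces a nondegenerate symplectic form on the $2m$-dimensional $\mathbb{F}_2$-space $C_2^\perp/C_2$ by $\langle u+C_2,v+C_2\rangle=\langle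 u,v\rangle$. Let $\rho:\mathbb{F}_4^m\to C_2^\perp/C_2$ be an $\mathbb{F}_2$-linear bijection with $\langle\rho(u),\rho(v)\rangle=\langle u,v\rangle$. For $D\in\{C_1,C_1^\perp\}$ define $\rho(D)=\{(w_1,\dots,w_n)\in(\mathbb{F}_4^{n_2})^n:\ \exists (v_1,\dots,v_n)\in D \text{ with } w_i\in\rho(v_i)\ \forall i\}$ (each $w_i$ ranges over the whole coset $\rho(v_i)$). *)

theory Defs
  imports Complex_Main "HOL-Computational_Algebra.Polynomial"
begin

definition vecs :: "nat \<Rightarrow> (nat \<Rightarrow> 'a::zero) set" where
  "vecs N = {v. \<forall>i\<ge>N. v i = 0}"

definition vadd :: "(nat \<Rightarrow> 'a::plus) \<Rightarrow> (nat \<Rightarrow> 'a) \<Rightarrow> nat \<Rightarrow> 'a" where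
  "vadd u v = (\<lambda>i. u i + v i)"

text \<open>Trace inner product on F4^N, conjugation = squaring; value lies in F2 = {0,1}.\<close>
definition tip :: "nat \<Rightarrow> (nat \<Rightarrow> 'q::field) \<Rightarrow> (nat \<Rightarrow> 'q) \<Rightarrow> 'q" where
  "tip N u v = (\<Sum>i<N. u i * (v i)^2 + (u i)^2 * v i)"

definition additive :: "nat \<Rightarrow> (nat \<Rightarrow> 'q::field) set \<Rightarrow> bool" where
  "additive N C \<longleftrightarrow> C \<subseteq> vecs N \<and> (\<lambda>_. 0) \<in> C \<and> (\<forall>u\<in>C. \<forall>v\<in>C. vadd u v \<in> C)"

definition tdual :: "nat \<Rightarrow> (nat \<Rightarrow> 'q::field) set \<Rightarrow> (nat \<Rightarrow> 'q) set" where
  "tdual N C = {v \<in> vecs N. \<forall>u\<in>C. tip N u v = 0}"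

definition self_orthogonal :: "nat \<Rightarrow> (nat \<Rightarrow> 'q::field) set \<Rightarrow> bool" where
  "self_orthogonal N C \<longleftrightarrow> C \<subseteq> tdual N C"

definition weight :: "nat \<Rightarrow> (nat \<Rightarrow> 'a::zero) \<Rightarrow> nat" where
  "weight N v = card {i. i < N \<and> v i \<noteq> 0}"

definition stabilizer_code :: "nat \<Rightarrow> nat \<Rightarrow> nat \<Rightarrow> (nat \<Rightarrow> 'q::field) set \<Rightarrow> bool" where
  "stabilizer_code N K D C \<longleftrightarrow> additive N C \<and> self_orthogonal N C \<and> K \<le> N \<and>
     card C = 2 ^ (N - K) \<and> (\<forall>v \<in> tdual N C - C. D \<le> weight N v)"

definition min_dist :: "nat \<Rightarrow> (nat \<Rightarrow> 'q::field) set \<Rightarrow> nat" where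
  "min_dist N C = Min (weight N ` (tdual N C - C))"

definition rel_min_dist :: "nat \<Rightarrow> (nat \<Rightarrow> 'q::field) set \<Rightarrow> real" where
  "rel_min_dist N C = real (min_dist N C) / real N"

definition primitive_elem :: "'f::field \<Rightarrow> bool" where
  "primitive_elem a \<longleftrightarrow> (\<forall>x. x \<noteq> 0 \<longrightarrow> (\<exists>i::nat. x = a ^ i))"

definition cyclic_code :: "nat \<Rightarrow> 'f::field poly \<Rightarrow> (nat \<Rightarrow> 'f) set" where
  "cyclic_code n g = {c \<in> vecs n. g dvd (\<Sum>i<n. monom (c i) i)}"

definition RS_code :: "nat \<Rightarrow> nat \<Rightarrow> 'f::field \<Rightarrow> (nat \<Rightarrow> 'f) set" where
  "RS_code n k a = cyclic_code n (\<Prod>i<n - k. [:- (a ^ i), 1:])"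

definition std_dual :: "nat \<Rightarrow> (nat \<Rightarrow> 'f::field) set \<Rightarrow> (nat \<Rightarrow> 'f) set" where
  "std_dual n C = {v \<in> vecs n. \<forall>u\<in>C. (\<Sum>i<n. u i * v i) = 0}"

definition trace2 :: "nat \<Rightarrow> 'f::field \<Rightarrow> 'f" where
  "trace2 m x = (\<Sum>i<m. x ^ (2 ^ i))"

definition self_dual_basis :: "nat \<Rightarrow> (nat \<Rightarrow> 'f::field) \<Rightarrow> bool" where
  "self_dual_basis m b \<longleftrightarrow>
     bij_betw (\<lambda>c. \<Sum>j<m. of_bool (c j) * b j) {c :: nat \<Rightarrow> bool. \<forall>j\<ge>m. \<not> c j} UNIV \<and>
     (\<forall>i<m. \<forall>j<m. trace2 m (b i * b j) = (if i = j then 1 else 0))"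

text \<open>Binary expansion: binary coordinate c_{ij} (position i, basis index j) sits at index i*m+j.\<close>
definition bin_exp :: "nat \<Rightarrow> nat \<Rightarrow> (nat \<Rightarrow> 'f::field) \<Rightarrow> (nat \<Rightarrow> 'f) set \<Rightarrow> (nat \<Rightarrow> bool) set" where
  "bin_exp n m b D = {c. (\<forall>p\<ge>n * m. \<not> c p) \<and> (\<lambda>i. \<Sum>j<m. of_bool (c (i * m + j)) * b j) \<in> D}"

text \<open>omega * B(D) + omega-bar * B(D) as an additive code in F4^{nm}.\<close>
definition omega_lift :: "'q::field \<Rightarrow> (nat \<Rightarrow> bool) set \<Rightarrow> (nat \<Rightarrow> 'q) set" where
  "omega_lift w B = {(\<lambda>p. w * of_bool (x p) + w^2 * of_bool (y p)) | x y. x \<in> B \<and> y \<in> B}"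

definition cosets_quot :: "nat \<Rightarrow> (nat \<Rightarrow> 'q::field) set \<Rightarrow> (nat \<Rightarrow> 'q) set set" where
  "cosets_quot N C = {(\<lambda>w. vadd v w) ` C | v. v \<in> tdual N C}"

definition coset_add :: "(nat \<Rightarrow> 'q::field) set \<Rightarrow> (nat \<Rightarrow> 'q) set \<Rightarrow> (nat \<Rightarrow> 'q) set" where
  "coset_add A B = {vadd a b | a b. a \<in> A \<and> b \<in> B}"

definition block :: "nat \<Rightarrow> nat \<Rightarrow> (nat \<Rightarrow> 'a::zero) \<Rightarrow> nat \<Rightarrow> 'a" where
  "block L i v = (\<lambda>j. if j < L then v (i * L + j) else 0)"

definition rho_code :: "nat \<Rightarrow> nat \<Rightarrow> nat \<Rightarrow> ((nat \<Rightarrow> 'q::field) \<Rightarrow> (nat \<Rightarrow> 'q) set)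
    \<Rightarrow> (nat \<Rightarrow> 'q) set \<Rightarrow> (nat \<Rightarrow> 'q) set" where
  "rho_code n m n2 \<rho> D = {w \<in> vecs (n * n2). \<exists>v\<in>D. \<forall>i<n. block n2 i w \<in> \<rho> (block m i v)}"

definition H4 :: "real \<Rightarrow> real" where
  "H4 x = - x * log 4 (x / 3) - (1 - x) * log 4 (1 - x)"

definition H4_inv :: "real \<Rightarrow> real" where
  "H4_inv y = (THE x. 0 < x \<and> x \<le> 3/4 \<and> H4 x = y)"

end

theory Submission
  imports Defs "HOL-Library.FuncSet"
begin

lemma even_card_involution:
  assumes "finite A" "\<forall>x\<in>A. s x \<in> A \<and> s x \<noteq> x \<and> s (s x) = x"
  shows "even (card A)"
  using assms
proof (induction "card A" arbitrary: A rule: less_induct)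
  case less
  show ?case
  proof (cases "A = {}")
    case True then show ?thesis by simp
  next
    case False
    then obtain x where x: "x \<in> A" by blast
    let ?A' = "A - {x, s x}"
    have sx: "s x \<in> A" "s x \<noteq> x" using less.prems x by auto
    have c: "card ?A' = card A - 2" using x sx less.prems(1) by (simp add: card_Diff_subset)
    have "card A \<ge> 2"
    proof -
      have "{x, s x} \<subseteq> A" using x sx by auto
      then have "card {x, s x} \<le> card A" by (rule card_mono[OF less.prems(1)])
      then show ?thesis using sx by simp
    qed
    have cl: "\<forall>y\<in>?A'. s y \<in> ?A' \<and> s y \<noteq> y \<and> s (s y) = y"
    proof
      fix y assume y: "y \<in> ?A'"
      have "s y \<noteq> x" using y less.prems(2) by (metis DiffD1 DiffD2 insertCI)
      moreover have "s y \<noteq> s x" using y less.prems(2) x by (metis DiffD1 DiffD2 insertCI)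
      ultimately show "s y \<in> ?A' \<and> s y \<noteq> y \<and> s (s y) = y" using y less.prems(2) by auto
    qed
    have "even (card ?A')"
      using less.hyps[of ?A'] c \<open>card A \<ge> 2\<close> cl less.prems(1) by simp
    moreover have "card A = card ?A' + 2" using c \<open>card A \<ge> 2\<close> by simp
    ultimately show ?thesis by simp
  qed
qed

lemma char2_of_card:
  assumes "card (UNIV :: 'a::{field,finite} set) = 2 ^ m" "m \<ge> 1"
  shows "(1::'a) + 1 = 0"
proof (rule ccontr)
  assume h: "(1::'a) + 1 \<noteq> 0"
  have inv: "\<forall>x\<in>(UNIV - {0::'a}). - x \<in> (UNIV - {0::'a}) \<and> - x \<noteq> x \<and> - (- x) = x"
  proof
    fix x :: 'a assume x: "x \<in> UNIV - {0}"
    have "-x \<noteq> x"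
    proof
      assume "-x = x"
      then have "(1+1) * x = 0" by (simp add: algebra_simps)
      then have "x = 0" using h by (simp only: mult_eq_0_iff) blast
      then show False using x by simp
    qed
    then show "- x \<in> (UNIV - {0::'a}) \<and> - x \<noteq> x \<and> - (- x) = x" using x by simp
  qed
  have "even (card (UNIV - {0::'a}))" by (rule even_card_involution[OF _ inv]) simp
  moreover have "card (UNIV - {0::'a}) = 2^m - 1" using assms(1) by (simp add: card_Diff_singleton)
  moreover have "odd (2^m - 1::nat)" using assms(2) by (simp add: odd_pos)
  ultimately show False by simp
qed

lemma char2_add_self: "(1::'a::field) + 1 = 0 \<Longrightarrow> (x::'a) + x = 0"
  by (metis distrib_left mult.right_neutral mult_zero_right)

lemma char2_sq_add: "(1::'a::field) + 1 = 0 \<Longrightarrow> ((x::'a) + y)^2 = x^2 + y^2"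
proof -
  assume h: "(1::'a) + 1 = 0"
  have "(x+y)^2 = x^2 + y^2 + (x*y + x*y)" by (simp add: power2_eq_square algebra_simps)
  then show ?thesis using char2_add_self[OF h, of "x*y"] by simp
qed

lemma char2_of_nat: "(1::'a::field) + 1 = 0 \<Longrightarrow> (of_nat N :: 'a) = 0 \<longleftrightarrow> even N"
proof (induction N)
  case 0 then show ?case by simp
next
  case (Suc N)
  have "of_nat (Suc N) = (1::'a) + of_nat N" by simp
  show ?case
  proof (cases "even N")
    case True
    then have "of_nat N = (0::'a)" using Suc by simp
    then show ?thesis using True by simp
  next
    case False
    then have "of_nat N \<noteq> (0::'a)" using Suc by simp
    moreover have "(of_nat N::'a) = 0 \<or> (of_nat N::'a) = 1"
    proof -
      obtain j where "N = 2*j+1" using False oddE by blast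
      then have "(of_nat N::'a) = of_nat j * (1+1) + 1" by (simp add: algebra_simps)
      then show ?thesis using Suc.prems by simp
    qed
    ultimately have "of_nat N = (1::'a)" by blast
    then have "of_nat (Suc N) = (0::'a)" using Suc.prems by (metis of_nat_Suc add.commute)
    then show ?thesis using False by simp
  qed
qed

definition bd :: "nat \<Rightarrow> (nat \<Rightarrow> bool) \<Rightarrow> (nat \<Rightarrow> bool) \<Rightarrow> nat" where
  "bd N x y = card ({..<N} \<inter> {p. x p \<and> y p})"

lemma sum_lessThan_add: "(\<Sum>p<a+(b::nat). f p) = (\<Sum>p<a. f p) + (\<Sum>j<b. f (a+j))"
  by (induction b) (simp_all add: add_ac)

lemma sum_blocks: "(\<Sum>p<n*(L::nat). f p) = (\<Sum>i<n. \<Sum>j<L. f (i*L+j))"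
proof (induction n)
  case 0 then show ?case by simp
next
  case (Suc n)
  have "(\<Sum>p<Suc n * L. f p) = (\<Sum>p<n*L + L. f p)" by (simp add: add.commute)
  also have "\<dots> = (\<Sum>p<n*L. f p) + (\<Sum>j<L. f (n*L+j))" by (rule sum_lessThan_add)
  finally show ?case using Suc by simp
qed

lemma tip_blocks: "tip (n*L) w w' = (\<Sum>i<n. tip L (block L i w) (block L i w'))"
  unfolding tip_def block_def by (simp add: sum_blocks)

lemma card_lessThan_filter: "card {i. i < (N::nat) \<and> P i} = (\<Sum>p<N. if P p then 1 else 0)"
proof -
  have "(\<Sum>p<N. (of_bool (P p)::nat)) = of_nat (card ({..<N} \<inter> {x. P x}))"
    using sum_of_bool_eq[of "{..<N}" P] by simp
  moreover have "{..<N} \<inter> {x. P x} = {i. i < N \<and> P i}" by auto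
  ultimately show ?thesis by (simp add: of_bool_def)
qed

lemma weight_blocks: "weight (n*L) w = (\<Sum>i<n. weight L (block L i w))"
  unfolding weight_def card_lessThan_filter block_def by (simp add: sum_blocks)

lemma block_in_vecs: "block L i w \<in> vecs L"
  unfolding block_def vecs_def by auto

lemma block_vadd: "block L i (vadd (u::nat\<Rightarrow>'a::monoid_add) v) = vadd (block L i u) (block L i v)"
  unfolding block_def vadd_def by (auto simp: fun_eq_iff)

lemma block_zero: "block L i (\<lambda>_. 0) = (\<lambda>_. 0)"
  unfolding block_def by auto

lemma vecs_eq_blocks:
  assumes "w \<in> vecs (n*L)" "w' \<in> vecs (n*L)" "\<forall>i<n. block L i w = block L i w'"
  shows "w = w'"
proof
  fix p
  show "w p = w' p"
  proof (cases "p < n*L")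
    case True
    then have L: "L > 0" by (cases L) auto
    have pd: "p div L < n" using True by (simp add: div_less_iff_less_mult L mult.commute)
    have pm: "p mod L < L" using L by simp
    have "block L (p div L) w (p mod L) = block L (p div L) w' (p mod L)" using assms(3) pd by simp
    then have "w (p div L * L + p mod L) = w' (p div L * L + p mod L)" unfolding block_def using pm by simp
    then show ?thesis by simp
  next
    case False
    then show ?thesis using assms(1,2) by (simp add: vecs_def)
  qed
qed

definition assemble :: "nat \<Rightarrow> nat \<Rightarrow> (nat \<Rightarrow> nat \<Rightarrow> 'a::zero) \<Rightarrow> nat \<Rightarrow> 'a" where
  "assemble L n f = (\<lambda>p. if p < n*L then f (p div L) (p mod L) else 0)"

lemma assemble_vecs: "assemble L n f \<in> vecs (n*L)"
  unfolding assemble_def vecs_def by auto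

lemma block_assemble:
  assumes "i < n" "f i \<in> vecs L"
  shows "block L i (assemble L n f) = f i"
proof
  fix j
  show "block L i (assemble L n f) j = f i j"
  proof (cases "j < L")
    case True
    have "i*L + j < n*L"
    proof -
      have "i*L + j < i*L + L" using True by simp
      also have "\<dots> = Suc i * L" by simp
      also have "\<dots> \<le> n*L" using assms(1) by (intro mult_le_mono1) simp
      finally show ?thesis .
    qed
    then show ?thesis using True unfolding block_def assemble_def by simp
  next
    case False
    then show ?thesis using assms(2) unfolding block_def vecs_def by simp
  qed
qed

lemma vecs_image_PiE: "vecs N = (\<lambda>(g::nat\<Rightarrow>'a::zero) i. if i < N then g i else 0) ` (PiE {..<N} (\<lambda>_. UNIV))"
proof (intro equalityI subsetI)
  fix v :: "nat \<Rightarrow> 'a" assume v: "v \<in> vecs N"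
  have e: "v = (\<lambda>i. if i < N then restrict v {..<N} i else 0)" using v by (auto simp: vecs_def fun_eq_iff)
  have r: "restrict v {..<N} \<in> PiE {..<N} (\<lambda>_. UNIV)" by simp
  show "v \<in> (\<lambda>g i. if i < N then g i else 0) ` (PiE {..<N} (\<lambda>_. UNIV))"
    by (rule image_eqI[where x="restrict v {..<N}"]) (fact e, fact r)
next
  fix v :: "nat \<Rightarrow> 'a" assume "v \<in> (\<lambda>g i. if i < N then g i else 0) ` (PiE {..<N} (\<lambda>_. UNIV))"
  then obtain g where "v = (\<lambda>i. if i < N then g i else 0)" by blast
  then show "v \<in> vecs N" by (simp add: vecs_def)
qed
lemma finite_vecs: "finite (vecs N :: (nat \<Rightarrow> 'a::{zero,finite}) set)"
proof -
  have "finite (PiE {..<N} (\<lambda>_. (UNIV::'a set)))" by (rule finite_PiE) auto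
  then show ?thesis unfolding vecs_image_PiE by (rule finite_imageI)
qed

lemma card_vecs: "card (vecs N :: (nat \<Rightarrow> 'a::{zero,finite}) set) = card (UNIV::'a set) ^ N"
proof -
  have "inj_on (\<lambda>g i. if i < N then g i else (0::'a)) (PiE {..<N} (\<lambda>_. UNIV))"
  proof (rule inj_onI)
    fix g h assume g: "g \<in> PiE {..<N} (\<lambda>_. (UNIV::'a set))" and h: "h \<in> PiE {..<N} (\<lambda>_. (UNIV::'a set))"
      and e: "(\<lambda>i. if i < N then g i else 0) = (\<lambda>i. if i < N then h i else 0)"
    show "g = h"
    proof (rule PiE_ext[OF g h])
      fix x assume "x \<in> {..<N}" then show "g x = h x" using fun_cong[OF e, of x] by simp
    qed
  qed
  then have "card (vecs N :: (nat \<Rightarrow> 'a) set) = card (PiE {..<N} (\<lambda>_. (UNIV::'a set)))"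
    unfolding vecs_image_PiE by (rule card_image)
  also have "\<dots> = card (UNIV::'a set) ^ N" by (simp add: card_PiE)
  finally show ?thesis .
qed

lemma vecs_vadd: "u \<in> vecs N \<Longrightarrow> v \<in> vecs N \<Longrightarrow> vadd (u::nat\<Rightarrow>'a::monoid_add) v \<in> vecs N"
  unfolding vecs_def vadd_def by auto

locale quat =
  fixes \<omega> :: "'q::{field,finite}"
  assumes q4: "card (UNIV :: 'q set) = 4"
    and omega: "\<omega>^2 = \<omega> + 1"
begin

lemma two0: "(1::'q) + 1 = 0"
  using char2_of_card[of 2] q4 by simp

lemma two0': "(2::'q) = 0" using two0 by simp

lemma xx0: "(x::'q) + x = 0" using char2_add_self[OF two0] .

lemma om3: "\<omega>^3 = 1"
proof -
  have "\<omega>^3 = \<omega> * \<omega>^2" by (simp add: power3_eq_cube power2_eq_square)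
  also have "\<dots> = (\<omega> + \<omega>) + 1" using omega by (simp add: algebra_simps power2_eq_square)
  finally show ?thesis using xx0 by simp
qed

lemma om_ne0: "\<omega> \<noteq> 0" using omega by auto
lemma om_ne1: "\<omega> \<noteq> 1" using omega two0 by auto
lemma om2_ne0: "\<omega>^2 \<noteq> 0" using om_ne0 by simp
lemma om2_ne1: "\<omega>^2 \<noteq> 1" using omega om_ne0 by auto
lemma om2_ne_om: "\<omega>^2 \<noteq> \<omega>" using omega by auto
lemma om_sum: "\<omega> + \<omega>^2 = 1"
  using omega xx0[of \<omega>] by (simp add: add.assoc[symmetric])

definition lv :: "bool \<Rightarrow> bool \<Rightarrow> 'q" where
  "lv a c = \<omega> * of_bool a + \<omega>^2 * of_bool c"

lemma lv_simps: "lv False False = 0" "lv True False = \<omega>" "lv False True = \<omega>^2" "lv True True = 1"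
  unfolding lv_def using om_sum by auto

lemma lv_inj: "lv a c = lv a' c' \<longleftrightarrow> a = a' \<and> c = c'"
  by (cases a; cases c; cases a'; cases c') (use om_ne0 om_ne1 om2_ne0 om2_ne1 om2_ne_om lv_simps in auto)

lemma lv_zero: "lv a c = 0 \<longleftrightarrow> \<not> a \<and> \<not> c"
  using lv_inj[of a c False False] lv_simps by simp

lemma univ_q: "(UNIV::'q set) = {0, \<omega>, \<omega>^2, 1}"
proof -
  have "card {0, \<omega>, \<omega>^2, (1::'q)} = 4"
    using om_ne0 om_ne1 om2_ne0 om2_ne1 om2_ne_om by auto
  then show ?thesis using q4 by (metis card_subset_eq finite subset_UNIV)
qed

lemma lv_surj: "\<exists>a c. z = lv a c"
proof -
  have "z \<in> {0, \<omega>, \<omega>^2, 1}" using univ_q by blast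
  then show ?thesis using lv_simps by (metis empty_iff insert_iff)
qed

lemma om4: "\<omega>^4 = \<omega>" using om3 by (metis mult.right_neutral power_Suc numeral_3_eq_3 numeral_Bit0 
    Suc_numeral semiring_norm(2) semiring_norm(8) numeral_plus_one)

lemma lv_tip: "lv a c * (lv a' c')^2 + (lv a c)^2 * lv a' c' = of_bool (a \<and> c') + of_bool (c \<and> a')"
proof -
  have p4: "(\<omega>^2)^2 = \<omega>" using om4 by (simp add: power_mult[symmetric])
  have a1: "\<omega> * \<omega> = \<omega>^2" by (simp add: power2_eq_square)
  have a2: "\<omega> * \<omega>^2 = 1" using om3 by (simp add: power3_eq_cube power2_eq_square mult.assoc)
  have a3: "\<omega>^2 * \<omega> = 1" using a2 by (simp add: mult.commute)
  have a4: "\<omega>^2 * \<omega>^2 = \<omega>" using p4 by (simp add: power2_eq_square)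
  have a5: "\<omega>^2 + \<omega> = 1" using om_sum by (simp add: add.commute)
  show ?thesis
    by (cases a; cases c; cases a'; cases c') 
       (simp_all add: lv_simps p4 a1 a2 a3 a4 a5 om4 xx0 om_sum)
qed

lemma lv_add: "lv a c + lv a' c' = lv (a \<noteq> a') (c \<noteq> c')"
  by (cases a; cases c; cases a'; cases c') (simp_all add: two0' lv_simps xx0 om_sum algebra_simps omega)

definition lift :: "(nat \<Rightarrow> bool) \<Rightarrow> (nat \<Rightarrow> bool) \<Rightarrow> nat \<Rightarrow> 'q" where
  "lift x y = (\<lambda>p. lv (x p) (y p))"

lemma omega_lift_eq: "omega_lift \<omega> B = (\<lambda>(x,y). lift x y) ` (B \<times> B)"
  unfolding omega_lift_def lift_def lv_def by auto

lemma lift_inj: "lift x y = lift x' y' \<longleftrightarrow> x = x' \<and> y = y'"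
  unfolding lift_def by (auto simp: fun_eq_iff lv_inj)

lemma card_omega_lift: "finite B \<Longrightarrow> card (omega_lift \<omega> B) = card B * card B"
  unfolding omega_lift_eq
  by (subst card_image) (auto simp: inj_on_def lift_inj card_cartesian_product)

lemma lift_vadd: "vadd (lift x y) (lift x' y') = lift (\<lambda>p. x p \<noteq> x' p) (\<lambda>p. y p \<noteq> y' p)"
  unfolding vadd_def lift_def by (simp add: lv_add)

lemma lift_zero_iff: "lift x y = (\<lambda>_. 0) \<longleftrightarrow> (\<forall>p. \<not> x p \<and> \<not> y p)"
  unfolding lift_def by (auto simp: fun_eq_iff lv_zero)

lemma lift_in_vecs: "(\<forall>p\<ge>N. \<not> x p \<and> \<not> y p) \<Longrightarrow> lift x y \<in> vecs N"
  unfolding vecs_def lift_def by (auto simp: lv_simps)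

lemma lift_dec:
  assumes "v \<in> vecs N"
  shows "\<exists>x y. v = lift x y \<and> (\<forall>p\<ge>N. \<not> x p \<and> \<not> y p)"
proof -
  have "\<forall>p. \<exists>ac. v p = lv (fst ac) (snd ac) \<and> (p \<ge> N \<longrightarrow> \<not> fst ac \<and> \<not> snd ac)"
  proof
    fix p
    show "\<exists>ac. v p = lv (fst ac) (snd ac) \<and> (p \<ge> N \<longrightarrow> \<not> fst ac \<and> \<not> snd ac)"
    proof (cases "p \<ge> N")
      case True
      then have "v p = 0" using assms by (auto simp: vecs_def)
      then show ?thesis by (intro exI[of _ "(False,False)"]) (simp add: lv_simps)
    next
      case False
      obtain a c where "v p = lv a c" using lv_surj by blast
      then show ?thesis using False by (intro exI[of _ "(a,c)"]) simp
    qed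
  qed
  then obtain f where f: "\<And>p. v p = lv (fst (f p)) (snd (f p)) \<and> (p \<ge> N \<longrightarrow> \<not> fst (f p) \<and> \<not> snd (f p))"
    by metis
  show ?thesis
    by (rule exI[of _ "\<lambda>p. fst (f p)"], rule exI[of _ "\<lambda>p. snd (f p)"]) (use f in \<open>auto simp: lift_def\<close>)
qed


lemma tip_lift: "tip N (lift x y) (lift x' y') = of_nat (bd N x y' + bd N y x')"
  unfolding tip_def lift_def bd_def by (simp add: lv_tip sum.distrib)

end

definition pvec :: "nat \<Rightarrow> (nat \<Rightarrow> 'a::comm_ring_1) \<Rightarrow> 'a poly" where
  "pvec N c = (\<Sum>i<N. monom (c i) i)"

definition psh :: "nat \<Rightarrow> (nat \<Rightarrow> 'a::comm_ring_1) \<Rightarrow> 'a poly" where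
  "psh N c = (\<Sum>i<N. monom (c i) (Suc i))"

lemma poly_pvec: "poly (pvec N c) x = (\<Sum>i<N. c i * x ^ i)"
  unfolding pvec_def by (simp add: poly_sum poly_monom)

lemma poly_psh: "poly (psh N c) x = (\<Sum>i<N. c i * x ^ Suc i)"
  unfolding psh_def by (simp add: poly_sum poly_monom)

lemma coeff_pvec: "coeff (pvec N c) j = (if j < N then c j else 0)"
  unfolding pvec_def coeff_sum by (simp add: sum.delta)

lemma coeff_psh: "coeff (psh N c) j = (if 0 < j \<and> j - 1 < N then c (j - 1) else 0)"
proof -
  have "coeff (psh N c) j = (\<Sum>i<N. if Suc i = j then c i else 0)"
    unfolding psh_def coeff_sum by simp
  also have "\<dots> = (\<Sum>i\<in>{..<N}. if i = j - 1 then (if 0 < j then c i else 0) else 0)"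
    by (rule sum.cong) auto
  also have "\<dots> = (if 0 < j \<and> j - 1 < N then c (j - 1) else 0)"
    by (subst sum.delta) auto
  finally show ?thesis .
qed

lemma degree_pvec: "N > 0 \<Longrightarrow> degree (pvec N c) < N"
proof -
  assume N: "N > 0"
  have "degree (pvec N c) \<le> N - 1" by (rule degree_le) (auto simp: coeff_pvec)
  then show ?thesis using N by linarith
qed

lemma degree_psh: "degree (psh N c) \<le> N"
  by (rule degree_le) (auto simp: coeff_psh)

lemma pvec_inj: "c \<in> vecs N \<Longrightarrow> c' \<in> vecs N \<Longrightarrow> pvec N c = pvec N c' \<Longrightarrow> c = c'"
proof
  fix j assume c: "c \<in> vecs N" and c': "c' \<in> vecs N" and e: "pvec N c = pvec N c'"
  have "coeff (pvec N c) j = coeff (pvec N c') j" using e by simp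
  then show "c j = c' j" using c c' by (auto simp: coeff_pvec vecs_def split: if_splits)
qed

lemma psh_inj: "c \<in> vecs N \<Longrightarrow> c' \<in> vecs N \<Longrightarrow> psh N c = psh N c' \<Longrightarrow> c = c'"
proof
  fix j assume c: "c \<in> vecs N" and c': "c' \<in> vecs N" and e: "psh N c = psh N c'"
  have "coeff (psh N c) (Suc j) = coeff (psh N c') (Suc j)" using e by simp
  then show "c j = c' j" using c c' by (auto simp: coeff_psh vecs_def split: if_splits)
qed

lemma pvec_vadd: "pvec N (vadd u v) = pvec N u + pvec N v"
  unfolding pvec_def vadd_def by (simp add: add_monom[symmetric] sum.distrib)

lemma pvec_smult: "pvec N (\<lambda>i. a * u i) = smult a (pvec N u)"
  unfolding pvec_def by (induction N) (simp_all add: smult_add_right smult_monom)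

lemma pvec_zero: "pvec N (\<lambda>_. 0) = 0"
  unfolding pvec_def by simp

lemma roots_prod_dvd:
  fixes p :: "'a::idom poly"
  assumes "finite T" "inj_on x T" "\<forall>t\<in>T. poly p (x t) = 0"
  shows "(\<Prod>t\<in>T. [:- x t, 1:]) dvd p"
  using assms
proof (induction T rule: finite_induct)
  case empty then show ?case by simp
next
  case (insert s T)
  then have "(\<Prod>t\<in>T. [:- x t, 1:]) dvd p" by (simp add: inj_on_insert)
  then obtain q where q: "p = (\<Prod>t\<in>T. [:- x t, 1:]) * q" by (auto simp: dvd_def)
  have ne: "poly (\<Prod>t\<in>T. [:- x t, 1:]) (x s) \<noteq> 0"
  proof -
    have "\<forall>t\<in>T. x s \<noteq> x t" using insert.prems(1) insert.hyps(2) by (auto simp: inj_on_def)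
    then show ?thesis by (simp add: poly_prod insert.hyps(1))
  qed
  have "poly p (x s) = 0" using insert.prems(2) by simp
  then have "poly q (x s) = 0" using ne q by simp
  then have "[:- x s, 1:] dvd q" by (simp add: poly_eq_0_iff_dvd)
  then have "[:- x s, 1:] * (\<Prod>t\<in>T. [:- x t, 1:]) dvd q * (\<Prod>t\<in>T. [:- x t, 1:])"
    by (rule mult_dvd_mono) simp
  then show ?case using q insert.hyps by (simp add: mult.commute)
qed

lemma degree_prod_lin: "degree (\<Prod>t\<in>T. [:- (x t), 1::'a::idom:]) = card T"
proof (cases "finite T")
  case True
  then show ?thesis by (subst degree_prod_eq_sum_degree) auto
next
  case False then show ?thesis by simp
qed

lemma cyc_card:
  fixes g :: "'a::{field,finite} poly"
  assumes g0: "g \<noteq> 0" and dg: "degree g \<le> N"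
  shows "card {c \<in> vecs N. g dvd pvec N c} \<le> card (UNIV::'a set) ^ (N - degree g)"
proof -
  let ?S = "{c \<in> vecs N. g dvd pvec N c}"
  let ?f = "\<lambda>c. coeff (pvec N c div g)"
  have inj: "inj_on ?f ?S"
  proof (rule inj_onI)
    fix c c' assume c: "c \<in> ?S" and c': "c' \<in> ?S" and e: "?f c = ?f c'"
    have "pvec N c div g = pvec N c' div g" using e by (simp add: poly_eq_iff)
    then have "pvec N c = pvec N c'" using c c' by (metis (no_types, lifting) dvd_div_mult_self mem_Collect_eq)
    then show "c = c'" using pvec_inj c c' by blast
  qed
  have sub: "?f ` ?S \<subseteq> vecs (N - degree g)"
  proof
    fix v assume "v \<in> ?f ` ?S"
    then obtain c where c: "c \<in> ?S" and v: "v = ?f c" by blast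
    show "v \<in> vecs (N - degree g)"
    proof (cases "pvec N c div g = 0")
      case True then show ?thesis using v by (simp add: vecs_def)
    next
      case False
      have pe: "pvec N c = g * (pvec N c div g)" using c by simp
      then have "pvec N c \<noteq> 0" using False g0 by (metis mult_eq_0_iff)
      then have N0: "N > 0" by (cases N) (auto simp: pvec_def)
      have "degree (pvec N c) = degree g + degree (pvec N c div g)"
        using pe False g0 by (metis degree_mult_eq)
      moreover have "degree (pvec N c) < N" using degree_pvec[OF N0] .
      ultimately have "degree (pvec N c div g) < N - degree g" by linarith
      then show ?thesis using v by (auto simp: vecs_def intro!: coeff_eq_0)
    qed
  qed
  have "card ?S = card (?f ` ?S)" using inj by (simp add: card_image)
  also have "\<dots> \<le> card (vecs (N - degree g) :: (nat \<Rightarrow> 'a) set)"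
    by (rule card_mono[OF finite_vecs sub])
  also have "\<dots> = card (UNIV::'a set) ^ (N - degree g)" by (rule card_vecs)
  finally show ?thesis .
qed

locale rs =
  fixes m n k :: nat and \<alpha> :: "'f::{field,finite}"
  assumes m2: "m \<ge> 2" and fcard: "card (UNIV::'f set) = 2^m" and n_def: "n = 2^m - 1"
    and k_lo: "1 \<le> k" and k_hi: "k \<le> 2^(m-1) - 1" and prim: "primitive_elem \<alpha>"
begin

lemma pow_m_ge4: "2^m \<ge> (4::nat)"
proof -
  have "(2::nat)^2 \<le> 2^m" using m2 by (intro power_increasing) auto
  then show ?thesis by simp
qed

lemma nk: "2 * k < n"
proof -
  have "(2::nat)^m = 2 * 2^(m-1)" using m2 by (cases m) auto
  moreover have "2^(m-1) \<ge> (1::nat)" by simp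
  ultimately show ?thesis using k_hi n_def by linarith
qed

lemma k_lt_n: "k < n" using nk k_lo by linarith

lemma card_nz: "card (UNIV - {0::'f}) = n"
  using fcard n_def by (simp add: card_Diff_singleton)

lemma alpha_ne0: "\<alpha> \<noteq> 0"
proof
  assume a: "\<alpha> = 0"
  have "UNIV - {0::'f} \<subseteq> {1}"
  proof
    fix x :: 'f assume "x \<in> UNIV - {0}"
    then obtain i where "x = \<alpha> ^ i" "x \<noteq> 0" using prim unfolding primitive_elem_def by blast
    then show "x \<in> {1}" using a by (cases i) auto
  qed
  then have "card (UNIV - {0::'f}) \<le> card {1::'f}" by (rule card_mono[rotated]) simp
  then have "card (UNIV - {0::'f}) \<le> 1" by simp
  then show False using card_nz n_def pow_m_ge4 by linarith
qed

definition ordd :: nat where "ordd = (LEAST d. 0 < d \<and> \<alpha>^d = 1)"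

lemma exists_period: "\<exists>d. 0 < d \<and> d \<le> n \<and> \<alpha>^d = 1"
proof -
  have "\<not> inj_on (\<lambda>i. \<alpha>^i) {..n}"
  proof
    assume inj: "inj_on (\<lambda>i. \<alpha>^i) {..n}"
    have "(\<lambda>i. \<alpha>^i) ` {..n} \<subseteq> UNIV - {0}" using alpha_ne0 by auto
    then have "card {..n} \<le> card (UNIV - {0::'f})" using inj by (intro card_inj_on_le) auto
    then show False using card_nz by simp
  qed
  then obtain i j where ij: "i \<le> n" "j \<le> n" "i \<noteq> j" "\<alpha>^i = \<alpha>^j" unfolding inj_on_def by auto
  show ?thesis
  proof (cases "i < j")
    case True
    have "\<alpha>^j = \<alpha>^i * \<alpha>^(j-i)" using True by (simp add: power_add[symmetric])
    then have "\<alpha>^(j-i) = 1" using ij(4) alpha_ne0 by simp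
    then show ?thesis using True ij by (intro exI[of _ "j-i"]) auto
  next
    case False
    then have F: "j < i" using ij(3) by simp
    have "\<alpha>^i = \<alpha>^j * \<alpha>^(i-j)" using F by (simp add: power_add[symmetric])
    then have "\<alpha>^(i-j) = 1" using ij(4) alpha_ne0 by simp
    then show ?thesis using F ij by (intro exI[of _ "i-j"]) auto
  qed
qed

lemma ordd_props: "0 < ordd" "\<alpha>^ordd = 1" "ordd \<le> n"
proof -
  obtain d where d: "0 < d" "d \<le> n" "\<alpha>^d = 1" using exists_period by blast
  have "0 < ordd \<and> \<alpha>^ordd = 1" unfolding ordd_def by (rule LeastI[of _ d]) (use d in auto)
  moreover have "ordd \<le> d" unfolding ordd_def by (rule Least_le) (use d in auto)
  ultimately show "0 < ordd" "\<alpha>^ordd = 1" "ordd \<le> n" using d by auto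
qed

lemma ordd_min: "0 < s \<Longrightarrow> s < ordd \<Longrightarrow> \<alpha>^s \<noteq> 1"
  unfolding ordd_def using not_less_Least by blast

lemma pow_mod: "\<alpha>^i = \<alpha>^(i mod ordd)"
proof -
  have "\<alpha>^i = \<alpha>^(ordd * (i div ordd) + i mod ordd)" by simp
  also have "\<dots> = (\<alpha>^ordd)^(i div ordd) * \<alpha>^(i mod ordd)" by (simp only: power_add power_mult)
  finally show ?thesis using ordd_props by simp
qed

lemma ordd_eq: "ordd = n"
proof -
  have "UNIV - {0::'f} \<subseteq> (\<lambda>i. \<alpha>^i) ` {..<ordd}"
  proof
    fix x :: 'f assume "x \<in> UNIV - {0}"
    then obtain i where "x = \<alpha>^i" using prim unfolding primitive_elem_def by blast
    then have "x = \<alpha>^(i mod ordd)" using pow_mod by simp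
    moreover have "i mod ordd < ordd" using ordd_props by simp
    ultimately show "x \<in> (\<lambda>i. \<alpha>^i) ` {..<ordd}" by blast
  qed
  then have "card (UNIV - {0::'f}) \<le> card ((\<lambda>i. \<alpha>^i) ` {..<ordd})" by (intro card_mono) auto
  also have "\<dots> \<le> ordd" using card_image_le[of "{..<ordd}" "\<lambda>i. \<alpha>^i"] by simp
  finally show ?thesis using card_nz ordd_props by simp
qed

lemma alpha_n: "\<alpha>^n = 1" using ordd_props ordd_eq by simp

lemma alpha_pow_ne1: "\<not> n dvd s \<Longrightarrow> \<alpha>^s \<noteq> 1"
proof -
  assume "\<not> n dvd s"
  then have "0 < s mod n" "s mod n < n" using k_lt_n by (auto simp: mod_greater_zero_iff_not_dvd)
  then have "\<alpha>^(s mod n) \<noteq> 1" using ordd_min ordd_eq by simp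
  then show ?thesis using pow_mod ordd_eq by simp
qed

lemma alpha_inj: "inj_on (\<lambda>i. \<alpha>^i) {..<n}"
proof (rule inj_onI)
  fix i j assume i: "i \<in> {..<n}" and j: "j \<in> {..<n}" and e: "\<alpha>^i = \<alpha>^j"
  show "i = j"
  proof (rule ccontr)
    assume "i \<noteq> j"
    then consider "i < j" | "j < i" by linarith
    then show False
    proof cases
      case 1
      have "\<alpha>^j = \<alpha>^i * \<alpha>^(j-i)" using 1 by (simp add: power_add[symmetric])
      then have "\<alpha>^(j-i) = 1" using e alpha_ne0 by simp
      moreover have "\<not> n dvd (j - i)" using 1 j by (auto dest: dvd_imp_le)
      ultimately show False using alpha_pow_ne1 by blast
    next
      case 2
      have "\<alpha>^i = \<alpha>^j * \<alpha>^(i-j)" using 2 by (simp add: power_add[symmetric])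
      then have "\<alpha>^(i-j) = 1" using e alpha_ne0 by simp
      moreover have "\<not> n dvd (i - j)" using 2 i by (auto dest: dvd_imp_le)
      ultimately show False using alpha_pow_ne1 by blast
    qed
  qed
qed

lemma geo0: "\<not> n dvd s \<Longrightarrow> (\<Sum>i<n. (\<alpha>^i)^s) = 0"
proof -
  assume s: "\<not> n dvd s"
  have "(\<Sum>i<n. (\<alpha>^i)^s) = (\<Sum>i<n. (\<alpha>^s)^i)" by (simp add: power_mult[symmetric] mult.commute)
  also have "\<dots> = 0"
  proof -
    have ne: "\<alpha>^s \<noteq> 1" using alpha_pow_ne1 s by blast
    have "(\<alpha>^s)^n = 1" using alpha_n by (metis power_mult mult.commute power_one)
    then show ?thesis using ne by (simp add: sum_gp_strict)
  qed
  finally show ?thesis .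
qed

end

context rs
begin

definition evv :: "'f poly \<Rightarrow> nat \<Rightarrow> 'f" where
  "evv f = (\<lambda>i. if i < n then poly f (\<alpha>^i) else 0)"

definition P1 :: "'f poly set" where "P1 = psh k ` vecs k"
definition P2 :: "'f poly set" where "P2 = pvec (n-k) ` vecs (n-k)"
definition E1 :: "(nat \<Rightarrow> 'f) set" where "E1 = evv ` P1"
definition E2 :: "(nat \<Rightarrow> 'f) set" where "E2 = evv ` P2"
definition gRS :: "'f poly" where "gRS = (\<Prod>i<n - k. [:- (\<alpha> ^ i), 1:])"
definition g2 :: "'f poly" where "g2 = (\<Prod>t<k. [:- (\<alpha> ^ Suc t), 1:])"

abbreviation "RS \<equiv> RS_code n k \<alpha>"
abbreviation "RSD \<equiv> std_dual n (RS_code n k \<alpha>)"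

lemma RS_def': "RS = {c \<in> vecs n. gRS dvd pvec n c}"
  unfolding RS_code_def cyclic_code_def gRS_def pvec_def by simp

lemma evv_vecs: "evv f \<in> vecs n" unfolding evv_def vecs_def by simp

lemma card_alpha_img: "card ((\<lambda>i. \<alpha>^i) ` {..<n}) = n"
  using alpha_inj by (simp add: card_image)

lemma evv_inj: "degree f < n \<Longrightarrow> degree g < n \<Longrightarrow> evv f = evv g \<Longrightarrow> f = g"
proof -
  assume df: "degree f < n" and dg: "degree g < n" and e: "evv f = evv g"
  show "f = g"
  proof (rule poly_eqI_degree[of "(\<lambda>i. \<alpha>^i) ` {..<n}"])
    fix x assume "x \<in> (\<lambda>i. \<alpha>^i) ` {..<n}"
    then obtain i where i: "i < n" "x = \<alpha>^i" by blast
    have "evv f i = evv g i" using e by simp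
    then show "poly f x = poly g x" using i by (simp add: evv_def)
  qed (use df dg card_alpha_img in auto)
qed

lemma deg_P1: "f \<in> P1 \<Longrightarrow> degree f < n"
  unfolding P1_def using degree_psh k_lt_n by (auto intro: le_less_trans)

lemma deg_P2: "f \<in> P2 \<Longrightarrow> degree f < n - k"
proof -
  assume "f \<in> P2"
  then obtain x where "f = pvec (n-k) x" unfolding P2_def by blast
  then show ?thesis by (simp add: degree_pvec k_lt_n)
qed

lemma card_E1: "card E1 = card (UNIV::'f set) ^ k"
proof -
  have "inj_on (evv \<circ> psh k) (vecs k)"
  proof (rule inj_onI)
    fix c c' assume c: "c \<in> vecs k" and c': "c' \<in> vecs k" and e: "(evv \<circ> psh k) c = (evv \<circ> psh k) c'"
    have "psh k c = psh k c'"
      by (rule evv_inj) (use e c c' deg_P1 in \<open>auto simp: P1_def\<close>)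
    then show "c = c'" using psh_inj c c' by blast
  qed
  then have "card ((evv \<circ> psh k) ` vecs k) = card (vecs k :: (nat \<Rightarrow> 'f) set)" by (rule card_image)
  then show ?thesis unfolding E1_def P1_def by (simp add: image_comp card_vecs)
qed

lemma card_E2: "card E2 = card (UNIV::'f set) ^ (n - k)"
proof -
  have "inj_on (evv \<circ> pvec (n-k)) (vecs (n-k))"
  proof (rule inj_onI)
    fix c c' assume c: "c \<in> vecs (n-k)" and c': "c' \<in> vecs (n-k)" and e: "(evv \<circ> pvec (n-k)) c = (evv \<circ> pvec (n-k)) c'"
    have d1: "degree (pvec (n-k) c) < n" using degree_pvec[of "n-k" c] k_lt_n by linarith
    have d2: "degree (pvec (n-k) c') < n" using degree_pvec[of "n-k" c'] k_lt_n by linarith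
    have "pvec (n-k) c = pvec (n-k) c'"
      by (rule evv_inj[OF d1 d2]) (use e in simp)
    then show "c = c'" using pvec_inj c c' by blast
  qed
  then have "card ((evv \<circ> pvec (n-k)) ` vecs (n-k)) = card (vecs (n-k) :: (nat \<Rightarrow> 'f) set)" by (rule card_image)
  then show ?thesis unfolding E2_def P2_def by (simp add: image_comp card_vecs)
qed

lemma orth_sum:
  assumes "finite J" "finite L" "\<forall>j\<in>J. \<forall>l\<in>L. \<not> n dvd (e j + e' l)"
  shows "(\<Sum>i<n. (\<Sum>j\<in>J. a j * (\<alpha>^i)^(e j)) * (\<Sum>l\<in>L. b l * (\<alpha>^i)^(e' l))) = 0"
proof -
  have "(\<Sum>i<n. (\<Sum>j\<in>J. a j * (\<alpha>^i)^(e j)) * (\<Sum>l\<in>L. b l * (\<alpha>^i)^(e' l)))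
      = (\<Sum>i<n. \<Sum>j\<in>J. \<Sum>l\<in>L. a j * b l * (\<alpha>^i)^(e j + e' l))"
    by (simp add: sum_product power_add mult_ac)
  also have "\<dots> = (\<Sum>j\<in>J. \<Sum>i<n. \<Sum>l\<in>L. a j * b l * (\<alpha>^i)^(e j + e' l))"
    by (rule sum.swap)
  also have "\<dots> = (\<Sum>j\<in>J. \<Sum>l\<in>L. \<Sum>i<n. a j * b l * (\<alpha>^i)^(e j + e' l))"
    by (rule sum.cong[OF refl], rule sum.swap)
  also have "\<dots> = (\<Sum>j\<in>J. \<Sum>l\<in>L. a j * b l * (\<Sum>i<n. (\<alpha>^i)^(e j + e' l)))"
    by (simp add: sum_distrib_left)
  also have "\<dots> = 0" using assms(3) geo0 by simp
  finally show ?thesis .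
qed

lemma not_dvd_small: "0 < x \<Longrightarrow> x < n \<Longrightarrow> \<not> n dvd x"
  by (auto dest: dvd_imp_le)

lemma E1_sub_RS: "E1 \<subseteq> RS"
proof
  fix u assume "u \<in> E1"
  then obtain h where h: "h \<in> vecs k" "u = evv (psh k h)" unfolding E1_def P1_def by blast
  have roots: "\<forall>t\<in>{..<n-k}. poly (pvec n u) (\<alpha>^t) = 0"
  proof
    fix t assume t: "t \<in> {..<n-k}"
    have "poly (pvec n u) (\<alpha>^t) = (\<Sum>i<n. u i * (\<alpha>^t)^i)" by (simp add: poly_pvec)
    also have "\<dots> = (\<Sum>i<n. (\<Sum>j\<in>{..<k}. h j * (\<alpha>^i)^(Suc j)) * (\<Sum>l\<in>{t}. 1 * (\<alpha>^i)^l))"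
      by (rule sum.cong) (simp_all add: h evv_def poly_psh power_mult[symmetric] mult.commute)
    also have "\<dots> = 0"
      by (rule orth_sum[where J="{..<k}" and L="{t}" and e=Suc and e'="\<lambda>l. l" and a=h and b="\<lambda>_. 1"])
        (use t k_lt_n in \<open>auto dest!: dvd_imp_le\<close>)
    finally show "poly (pvec n u) (\<alpha>^t) = 0" .
  qed
  have "gRS dvd pvec n u" unfolding gRS_def
    by (rule roots_prod_dvd[OF _ _ roots]) (auto intro: inj_on_subset[OF alpha_inj])
  then show "u \<in> RS" unfolding RS_def' using h evv_vecs by simp
qed

lemma deg_gRS: "degree gRS = n - k" unfolding gRS_def by (simp add: degree_prod_lin)
lemma gRS_ne0: "gRS \<noteq> 0" unfolding gRS_def by auto
lemma deg_g2: "degree g2 = k" unfolding g2_def by (simp add: degree_prod_lin)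
lemma g2_ne0: "g2 \<noteq> 0" unfolding g2_def by auto

lemma RS_sub_vecs: "RS \<subseteq> vecs n" unfolding RS_def' by auto

lemma finite_RS: "finite RS" using finite_subset[OF RS_sub_vecs finite_vecs] .

lemma RS_eq: "RS = E1"
proof -
  have "card RS \<le> card (UNIV::'f set) ^ (n - degree gRS)"
    unfolding RS_def' by (rule cyc_card[OF gRS_ne0]) (simp add: deg_gRS)
  then have "card RS \<le> card E1" using deg_gRS k_lt_n card_E1 by simp
  then have "card E1 = card RS" using card_mono[OF finite_RS E1_sub_RS] by linarith
  then show ?thesis using card_subset_eq[OF finite_RS E1_sub_RS] by metis
qed

lemma E2_sub_RSD: "E2 \<subseteq> RSD"
proof
  fix v assume "v \<in> E2"
  then obtain h2 where h2: "h2 \<in> vecs (n-k)" "v = evv (pvec (n-k) h2)" unfolding E2_def P2_def by blast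
  have "\<forall>u\<in>RS. (\<Sum>i<n. u i * v i) = 0"
  proof
    fix u assume "u \<in> RS"
    then obtain h where h: "h \<in> vecs k" "u = evv (psh k h)" unfolding RS_eq E1_def P1_def by blast
    have "(\<Sum>i<n. u i * v i) = (\<Sum>i<n. (\<Sum>j\<in>{..<k}. h j * (\<alpha>^i)^(Suc j)) * (\<Sum>l\<in>{..<n-k}. h2 l * (\<alpha>^i)^l))"
      by (rule sum.cong) (simp_all add: h h2 evv_def poly_psh poly_pvec)
    also have "\<dots> = 0"
      by (rule orth_sum[where J="{..<k}" and L="{..<n-k}" and e=Suc and e'="\<lambda>l. l" and a=h and b=h2])
        (use k_lt_n in \<open>auto dest!: dvd_imp_le\<close>)
    finally show "(\<Sum>i<n. u i * v i) = 0" .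
  qed
  then show "v \<in> RSD" unfolding std_dual_def using h2 evv_vecs by simp
qed

lemma delta_sum: "t < k \<Longrightarrow> (\<Sum>j<k. (if j = t then 1 else 0) * (y::'f)^Suc j) = y^Suc t"
proof -
  assume t: "t < k"
  have "(\<Sum>j<k. (if j = t then 1 else 0) * y^Suc j) = (\<Sum>j\<in>{..<k}. if j = t then y^Suc j else 0)"
    by (rule sum.cong) auto
  also have "\<dots> = y^Suc t" using t by (subst sum.delta) auto
  finally show ?thesis .
qed

lemma RSD_sub_cyc2: "RSD \<subseteq> {c \<in> vecs n. g2 dvd pvec n c}"
proof
  fix v assume v: "v \<in> RSD"
  have roots: "\<forall>t\<in>{..<k}. poly (pvec n v) (\<alpha>^Suc t) = 0"
  proof
    fix t assume t: "t \<in> {..<k}"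
    let ?h = "\<lambda>j. if j = t then (1::'f) else 0"
    have hv: "?h \<in> vecs k" using t by (auto simp: vecs_def)
    have uin: "evv (psh k ?h) \<in> RS" unfolding RS_eq E1_def P1_def using hv by blast
    have "poly (pvec n v) (\<alpha>^Suc t) = (\<Sum>i<n. v i * (\<alpha>^Suc t)^i)" by (simp add: poly_pvec)
    also have "\<dots> = (\<Sum>i<n. evv (psh k ?h) i * v i)"
    proof (rule sum.cong)
      fix i assume i: "i \<in> {..<n}"
      have e1: "evv (psh k ?h) i = (\<alpha>^i)^Suc t" using i t by (simp add: evv_def poly_psh delta_sum del: power_Suc)
      have e2: "(\<alpha>^Suc t)^i = (\<alpha>^i)^Suc t" by (metis power_mult mult.commute)
      show "v i * (\<alpha>^Suc t)^i = evv (psh k ?h) i * v i"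
        by (simp only: e1 e2 mult.commute)
    qed simp
    also have "\<dots> = 0" using v uin unfolding std_dual_def by blast
    finally show "poly (pvec n v) (\<alpha>^Suc t) = 0" .
  qed
  have inj: "inj_on (\<lambda>t. \<alpha>^Suc t) {..<k}"
  proof (rule inj_onI)
    fix s t assume "s \<in> {..<k}" "t \<in> {..<k}" "\<alpha>^Suc s = \<alpha>^Suc t"
    moreover have "Suc s \<in> {..<n}" "Suc t \<in> {..<n}" using \<open>s \<in> {..<k}\<close> \<open>t \<in> {..<k}\<close> k_lt_n by auto
    ultimately have "Suc s = Suc t" using inj_onD[OF alpha_inj] by blast
    then show "s = t" by simp
  qed
  have "g2 dvd pvec n v" unfolding g2_def
    by (rule roots_prod_dvd[OF _ inj roots]) simp
  moreover have "v \<in> vecs n" using v unfolding std_dual_def by simp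
  ultimately show "v \<in> {c \<in> vecs n. g2 dvd pvec n c}" by simp
qed

lemma RSD_sub_vecs: "RSD \<subseteq> vecs n" unfolding std_dual_def by auto
lemma finite_RSD: "finite RSD" using finite_subset[OF RSD_sub_vecs finite_vecs] .

lemma RSD_eq: "RSD = E2"
proof -
  have "card RSD \<le> card {c \<in> vecs n. g2 dvd pvec n c}"
    by (rule card_mono[OF _ RSD_sub_cyc2]) (rule finite_subset[OF _ finite_vecs], auto)
  also have "\<dots> \<le> card (UNIV::'f set) ^ (n - degree g2)"
    by (rule cyc_card[OF g2_ne0]) (simp add: deg_g2 less_imp_le k_lt_n)
  finally have "card RSD \<le> card E2" using deg_g2 card_E2 by simp
  then have "card E2 = card RSD" using card_mono[OF finite_RSD E2_sub_RSD] by linarith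
  then show ?thesis using card_subset_eq[OF finite_RSD E2_sub_RSD] by metis
qed

lemma weight_RSD:
  assumes v: "v \<in> RSD" "v \<noteq> (\<lambda>_. 0)"
  shows "k + 1 \<le> card {i. i < n \<and> v i \<noteq> 0}"
proof -
  obtain f where f: "f \<in> P2" "v = evv f" using v RSD_eq unfolding E2_def by blast
  have e0: "evv 0 = (\<lambda>_. 0)" by (simp add: evv_def fun_eq_iff)
  have f0: "f \<noteq> 0" using f v e0 by metis
  let ?Z = "{i. i < n \<and> v i = 0}"
  have "(\<lambda>i. \<alpha>^i) ` ?Z \<subseteq> {x. poly f x = 0}" using f by (auto simp: evv_def)
  then have "card ((\<lambda>i. \<alpha>^i) ` ?Z) \<le> card {x. poly f x = 0}"
    by (rule card_mono[OF poly_roots_finite[OF f0]])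
  also have "\<dots> \<le> degree f" by (rule card_poly_roots_bound[OF f0])
  finally have cz: "card ?Z < n - k" using deg_P2[OF f(1)] inj_on_subset[OF alpha_inj, of ?Z]
    by (simp add: card_image subset_eq)
  have "{i. i < n \<and> v i \<noteq> 0} = {..<n} - ?Z" by auto
  then have "card {i. i < n \<and> v i \<noteq> 0} = n - card ?Z" by (simp add: card_Diff_subset subset_eq)
  then show ?thesis using cz k_lt_n by linarith
qed

lemma RS_zero: "(\<lambda>_. 0) \<in> RS" unfolding RS_def' by (simp add: pvec_zero vecs_def)

lemma RS_add: "u \<in> RS \<Longrightarrow> v \<in> RS \<Longrightarrow> vadd u v \<in> RS"
  unfolding RS_def' by (simp add: pvec_vadd vecs_vadd)

lemma RS_smult: "u \<in> RS \<Longrightarrow> (\<lambda>i. a * u i) \<in> RS"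
  unfolding RS_def' by (auto simp: pvec_smult vecs_def dvd_smult)

lemma card_RS: "card RS = 2 ^ (m * k)"
  using RS_eq card_E1 fcard by (simp add: power_mult)

lemma card_RSD: "card RSD = 2 ^ (m * (n - k))"
  using RSD_eq card_E2 fcard by (simp add: power_mult)

lemma RS_sub_RSD: "RS \<subseteq> RSD"
proof
  fix v assume "v \<in> RS"
  then obtain h2 where h2: "h2 \<in> vecs k" "v = evv (psh k h2)" unfolding RS_eq E1_def P1_def by blast
  have "\<forall>u\<in>RS. (\<Sum>i<n. u i * v i) = 0"
  proof
    fix u assume "u \<in> RS"
    then obtain h where h: "h \<in> vecs k" "u = evv (psh k h)" unfolding RS_eq E1_def P1_def by blast
    have "(\<Sum>i<n. u i * v i) = (\<Sum>i<n. (\<Sum>j\<in>{..<k}. h j * (\<alpha>^i)^(Suc j)) * (\<Sum>l\<in>{..<k}. h2 l * (\<alpha>^i)^(Suc l)))"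
      by (rule sum.cong) (simp_all add: h h2 evv_def poly_psh)
    also have "\<dots> = 0"
      by (rule orth_sum[where J="{..<k}" and L="{..<k}" and e=Suc and e'=Suc and a=h and b=h2])
        (use nk in \<open>auto dest!: dvd_imp_le\<close>)
    finally show "(\<Sum>i<n. u i * v i) = 0" .
  qed
  then show "v \<in> RSD" unfolding std_dual_def using h2 evv_vecs by simp
qed

end

locale bexp =
  fixes m n :: nat and b :: "nat \<Rightarrow> 'f::{field,finite}"
  assumes m2: "m \<ge> 2" and fcard: "card (UNIV::'f set) = 2^m" and sdb: "self_dual_basis m b"
begin

lemma two0F: "(1::'f) + 1 = 0" using char2_of_card[OF fcard] m2 by simp

definition Em :: "(nat \<Rightarrow> bool) \<Rightarrow> 'f" where "Em c = (\<Sum>j<m. of_bool (c j) * b j)"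
definition Dm :: "(nat \<Rightarrow> bool) set" where "Dm = {c. \<forall>j\<ge>m. \<not> c j}"

lemma Em_bij: "bij_betw Em Dm UNIV"
  using sdb unfolding self_dual_basis_def Em_def Dm_def by blast

lemma tr_bb: "i < m \<Longrightarrow> j < m \<Longrightarrow> trace2 m (b i * b j) = (if i = j then 1 else 0)"
  using sdb unfolding self_dual_basis_def by blast

lemma pow2_add: "(x + y :: 'f)^(2^i) = x^(2^i) + y^(2^i)"
proof (induction i)
  case 0 then show ?case by simp
next
  case (Suc i)
  have "(x + y)^(2^Suc i) = ((x+y)^(2^i))^2" by (simp add: power_mult[symmetric] mult.commute)
  also have "\<dots> = (x^(2^i))^2 + (y^(2^i))^2" using Suc char2_sq_add[OF two0F] by simp
  also have "\<dots> = x^(2^Suc i) + y^(2^Suc i)" by (simp add: power_mult[symmetric] mult.commute)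
  finally show ?case .
qed

lemma tr_add: "trace2 m (x + (y::'f)) = trace2 m x + trace2 m y"
proof -
  have "(\<Sum>i<m. (x+y)^2^i) = (\<Sum>i<m. x^2^i + y^2^i)" by (rule sum.cong[OF refl]) (rule pow2_add)
  then show ?thesis unfolding trace2_def by (simp add: sum.distrib)
qed

lemma tr_zero: "trace2 m (0::'f) = 0"
  unfolding trace2_def by (simp add: power_0_left)

lemma tr_sum: "trace2 m (\<Sum>x\<in>A. (f x::'f)) = (\<Sum>x\<in>A. trace2 m (f x))"
proof (cases "finite A")
  case True then show ?thesis by (induction A rule: finite_induct) (simp_all add: tr_zero tr_add)
next
  case False then show ?thesis by (simp add: tr_zero)
qed

lemma tr_ofbool: "trace2 m (of_bool a * (x::'f)) = of_bool a * trace2 m x"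
  by (cases a) (simp_all add: tr_zero)

definition BS :: "(nat \<Rightarrow> bool) set" where "BS = {c. \<forall>p\<ge>n*m. \<not> c p}"
definition fv :: "(nat \<Rightarrow> bool) \<Rightarrow> nat \<Rightarrow> 'f" where
  "fv c = (\<lambda>i. \<Sum>j<m. of_bool (c (i*m+j)) * b j)"

lemma bin_exp_eq: "bin_exp n m b D = {c \<in> BS. fv c \<in> D}"
  unfolding bin_exp_def BS_def fv_def by auto

lemma tr_fv_b: "l < m \<Longrightarrow> trace2 m (fv c i * b l) = of_bool (c (i*m+l))"
proof -
  assume l: "l < m"
  have "trace2 m (fv c i * b l) = trace2 m (\<Sum>j<m. of_bool (c (i*m+j)) * (b j * b l))"
    unfolding fv_def by (simp add: sum_distrib_right mult.assoc)
  also have "\<dots> = (\<Sum>j<m. of_bool (c (i*m+j)) * trace2 m (b j * b l))"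
    by (simp add: tr_sum tr_ofbool)
  also have "\<dots> = (\<Sum>j\<in>{..<m}. if j = l then of_bool (c (i*m+j)) else 0)"
    by (rule sum.cong) (auto simp: tr_bb l)
  also have "\<dots> = of_bool (c (i*m+l))" using l by (subst sum.delta) auto
  finally show ?thesis .
qed

lemma dot_tr: "of_nat (bd (n*m) c c') = trace2 m (\<Sum>i<n. fv c i * fv c' i)"
proof -
  have "trace2 m (\<Sum>i<n. fv c i * fv c' i) = (\<Sum>i<n. \<Sum>l<m. of_bool (c' (i*m+l)) * trace2 m (fv c i * b l))"
    unfolding tr_sum by (rule sum.cong) (simp_all add: fv_def[of c'] sum_distrib_left tr_sum tr_ofbool mult_ac)
  also have "\<dots> = (\<Sum>i<n. \<Sum>l<m. of_bool (c (i*m+l) \<and> c' (i*m+l)))"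
    by (rule sum.cong, simp, rule sum.cong) (auto simp: tr_fv_b)
  also have "\<dots> = (\<Sum>p<n*m. of_bool (c p \<and> c' p))" by (simp add: sum_blocks)
  also have "\<dots> = of_nat (bd (n*m) c c')" unfolding bd_def by (subst sum_of_bool_eq) auto
  finally show ?thesis by simp
qed

lemma fv_vecs: "c \<in> BS \<Longrightarrow> fv c \<in> vecs n"
proof -
  assume c: "c \<in> BS"
  have "\<forall>i\<ge>n. fv c i = 0"
  proof (intro allI impI)
    fix i assume i: "n \<le> i"
    have "\<forall>j<m. \<not> c (i*m+j)"
    proof (intro allI impI)
      fix j assume "j < m"
      have "n*m \<le> i*m" using i by (rule mult_le_mono1)
      then have "n*m \<le> i*m+j" by linarith
      then show "\<not> c (i*m+j)" using c unfolding BS_def by blast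
    qed
    then show "fv c i = 0" unfolding fv_def by simp
  qed
  then show ?thesis unfolding vecs_def by simp
qed

definition blk :: "(nat \<Rightarrow> bool) \<Rightarrow> nat \<Rightarrow> nat \<Rightarrow> bool" where
  "blk c i = (\<lambda>j. j < m \<and> c (i*m+j))"

lemma fv_blk: "fv c i = Em (blk c i)"
  unfolding fv_def Em_def blk_def by (rule sum.cong) auto

lemma blk_Dm: "blk c i \<in> Dm" unfolding blk_def Dm_def by auto

lemma fv_inj: "inj_on fv BS"
proof (rule inj_onI)
  fix c c' assume c: "c \<in> BS" and c': "c' \<in> BS" and e: "fv c = fv c'"
  show "c = c'"
  proof
    fix p
    show "c p = c' p"
    proof (cases "p < n*m")
      case True
      then have m0: "m > 0" by (cases m) auto
      have "Em (blk c (p div m)) = Em (blk c' (p div m))" using e fv_blk by metis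
      then have "blk c (p div m) = blk c' (p div m)"
        using Em_bij blk_Dm unfolding bij_betw_def inj_on_def by blast
      then have "blk c (p div m) (p mod m) = blk c' (p div m) (p mod m)" by simp
      then show ?thesis using m0 unfolding blk_def by simp
    next
      case False then show ?thesis using c c' unfolding BS_def by simp
    qed
  qed
qed

lemma fv_surj: "u \<in> vecs n \<Longrightarrow> \<exists>c\<in>BS. fv c = u"
proof -
  assume u: "u \<in> vecs n"
  define d where "d = (\<lambda>i. inv_into Dm Em (u i))"
  have dD: "d i \<in> Dm" for i
    using Em_bij unfolding d_def bij_betw_def by (auto intro: inv_into_into)
  have Ed: "Em (d i) = u i" for i
  proof -
    have "u i \<in> Em ` Dm" using Em_bij unfolding bij_betw_def by simp
    then show ?thesis unfolding d_def by (rule f_inv_into_f)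
  qed
  define c where "c = (\<lambda>p. p < n*m \<and> d (p div m) (p mod m))"
  have cBS: "c \<in> BS" unfolding BS_def c_def by auto
  have "fv c = u"
  proof
    fix i
    show "fv c i = u i"
    proof (cases "i < n")
      case True
      have "blk c i = d i"
      proof
        fix j
        show "blk c i j = d i j"
        proof (cases "j < m")
          case True
          have "i*m + j < n*m"
          proof -
            have "i*m + j < i*m + m" using True by simp
            also have "\<dots> = Suc i * m" by simp
            also have "\<dots> \<le> n*m" using \<open>i < n\<close> by (intro mult_le_mono1) simp
            finally show ?thesis .
          qed
          then show ?thesis using True unfolding blk_def c_def by simp
        next
          case False then show ?thesis using dD[of i] unfolding blk_def Dm_def by simp
        qed
      qed
      then show ?thesis using fv_blk Ed by metis
    next
      case False
      then show ?thesis using fv_vecs[OF cBS] u unfolding vecs_def by simp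
    qed
  qed
  then show ?thesis using cBS by blast
qed

lemma card_bin_exp: "D \<subseteq> vecs n \<Longrightarrow> card (bin_exp n m b D) = card D"
proof -
  assume D: "D \<subseteq> vecs n"
  have "fv ` {c \<in> BS. fv c \<in> D} = D"
  proof
    show "D \<subseteq> fv ` {c \<in> BS. fv c \<in> D}"
    proof
      fix u assume "u \<in> D"
      then obtain c where "c \<in> BS" "fv c = u" using fv_surj D by blast
      then show "u \<in> fv ` {c \<in> BS. fv c \<in> D}" using \<open>u \<in> D\<close> by blast
    qed
  qed auto
  moreover have "inj_on fv {c \<in> BS. fv c \<in> D}" by (rule inj_on_subset[OF fv_inj]) auto
  ultimately show ?thesis unfolding bin_exp_eq by (metis card_image)
qed

lemma bin_exp_mono: "D \<subseteq> D' \<Longrightarrow> bin_exp n m b D \<subseteq> bin_exp n m b D'"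
  unfolding bin_exp_eq by auto

lemma bin_exp_BS: "bin_exp n m b D \<subseteq> BS"
  unfolding bin_exp_eq by auto

lemma ofbool_xor: "(of_bool (x \<noteq> y) :: 'f) = of_bool x + of_bool y"
  using two0F by (cases x; cases y) auto

lemma fv_xor: "fv (\<lambda>p. c p \<noteq> c' p) = vadd (fv c) (fv c')"
  unfolding fv_def vadd_def by (rule ext) (simp only: ofbool_xor distrib_right sum.distrib)

lemma bin_exp_xor:
  assumes "\<forall>u\<in>D. \<forall>v\<in>D. vadd u v \<in> D" "c \<in> bin_exp n m b D" "c' \<in> bin_exp n m b D"
  shows "(\<lambda>p. c p \<noteq> c' p) \<in> bin_exp n m b D"
proof -
  have "fv c \<in> D" "fv c' \<in> D" "c \<in> BS" "c' \<in> BS" using assms(2,3) unfolding bin_exp_eq by auto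
  then have "fv (\<lambda>p. c p \<noteq> c' p) \<in> D" using assms(1) fv_xor by metis
  moreover have "(\<lambda>p. c p \<noteq> c' p) \<in> BS" using \<open>c \<in> BS\<close> \<open>c' \<in> BS\<close> unfolding BS_def by auto
  ultimately show ?thesis unfolding bin_exp_eq by blast
qed

lemma bin_exp_zero: "(\<lambda>_. 0) \<in> D \<Longrightarrow> (\<lambda>_. False) \<in> bin_exp n m b D"
  unfolding bin_exp_eq BS_def fv_def by simp

lemma bin_exp_dual:
  assumes D: "D \<subseteq> vecs n" and sm: "\<forall>u\<in>D. \<forall>a. (\<lambda>i. a * u i) \<in> D"
  shows "bin_exp n m b (std_dual n D) = {c' \<in> BS. \<forall>c\<in>bin_exp n m b D. even (bd (n*m) c c')}"
proof
  show "bin_exp n m b (std_dual n D) \<subseteq> {c' \<in> BS. \<forall>c\<in>bin_exp n m b D. even (bd (n*m) c c')}"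
  proof
    fix c' assume "c' \<in> bin_exp n m b (std_dual n D)"
    then have c': "c' \<in> BS" "fv c' \<in> std_dual n D" unfolding bin_exp_eq by auto
    have "even (bd (n*m) c c')" if c: "c \<in> bin_exp n m b D" for c
    proof -
      have "fv c \<in> D" using c unfolding bin_exp_eq by auto
      then have "(\<Sum>i<n. fv c i * fv c' i) = 0" using c'(2) unfolding std_dual_def by auto
      then have "(of_nat (bd (n*m) c c') :: 'f) = 0" using dot_tr tr_zero by metis
      then show ?thesis using char2_of_nat[OF two0F] by blast
    qed
    then show "c' \<in> {c' \<in> BS. \<forall>c\<in>bin_exp n m b D. even (bd (n*m) c c')}" using c' by blast
  qed
next
  show "{c' \<in> BS. \<forall>c\<in>bin_exp n m b D. even (bd (n*m) c c')} \<subseteq> bin_exp n m b (std_dual n D)"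
  proof
    fix c' assume "c' \<in> {c' \<in> BS. \<forall>c\<in>bin_exp n m b D. even (bd (n*m) c c')}"
    then have c': "c' \<in> BS" and ev: "\<forall>c\<in>bin_exp n m b D. even (bd (n*m) c c')" by auto
    have "\<forall>u\<in>D. (\<Sum>i<n. u i * fv c' i) = 0"
    proof (rule ballI, rule ccontr)
      fix u assume u: "u \<in> D" and s: "(\<Sum>i<n. u i * fv c' i) \<noteq> 0"
      define s where "s = (\<Sum>i<n. u i * fv c' i)"
      define a where "a = b 0 * b 0 / s"
      have "(\<lambda>i. a * u i) \<in> D" using sm u by blast
      moreover then have "(\<lambda>i. a * u i) \<in> vecs n" using D by blast
      then obtain c where c: "c \<in> BS" "fv c = (\<lambda>i. a * u i)" using fv_surj by blast
      ultimately have cb: "c \<in> bin_exp n m b D" unfolding bin_exp_eq by simp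
      have "(\<Sum>i<n. fv c i * fv c' i) = a * s"
        unfolding c(2) s_def by (simp add: sum_distrib_left mult.assoc)
      also have "\<dots> = b 0 * b 0" unfolding a_def using s s_def by simp
      finally have "(of_nat (bd (n*m) c c') :: 'f) = trace2 m (b 0 * b 0)" using dot_tr by metis
      also have "\<dots> = 1" using tr_bb[of 0 0] m2 by simp
      finally have "(of_nat (bd (n*m) c c') :: 'f) = 1" .
      moreover have "(of_nat (bd (n*m) c c') :: 'f) = 0" using ev cb char2_of_nat[OF two0F] by blast
      ultimately show False by simp
    qed
    moreover have "fv c' \<in> vecs n" using fv_vecs c' by blast
    ultimately have "fv c' \<in> std_dual n D" unfolding std_dual_def by blast
    then show "c' \<in> bin_exp n m b (std_dual n D)" using c' unfolding bin_exp_eq by blast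
  qed
qed

end

lemma vadd_assoc: "vadd (vadd x y) z = vadd x (vadd y (z::nat \<Rightarrow> 'a::ab_group_add))"
  unfolding vadd_def by (simp add: add.assoc)
lemma vadd_comm: "vadd x (y::nat \<Rightarrow> 'a::ab_group_add) = vadd y x"
  unfolding vadd_def by (simp add: add.commute)
lemma vadd_0: "vadd (\<lambda>_. 0) (x::nat \<Rightarrow> 'a::ab_group_add) = x" "vadd x (\<lambda>_. 0) = x"
  unfolding vadd_def by simp_all

locale innr =
  fixes n2 m d2 :: nat and C2 :: "(nat \<Rightarrow> 'q::{field,finite}) set"
    and \<rho> :: "(nat \<Rightarrow> 'q) \<Rightarrow> (nat \<Rightarrow> 'q) set"
  assumes two0q: "(1::'q) + 1 = 0"
    and inner: "stabilizer_code n2 m d2 C2"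
    and rho_bij: "bij_betw \<rho> (vecs m) (cosets_quot n2 C2)"
    and rho_add: "\<forall>u\<in>vecs m. \<forall>v\<in>vecs m. \<rho> (vadd u v) = coset_add (\<rho> u) (\<rho> v)"
    and rho_form: "\<forall>u\<in>vecs m. \<forall>v\<in>vecs m. \<forall>x\<in>\<rho> u. \<forall>y\<in>\<rho> v. tip n2 x y = tip m u v"
begin

lemma C2_add: "additive n2 C2" using inner unfolding stabilizer_code_def by blast
lemma C2_vecs: "C2 \<subseteq> vecs n2" using C2_add unfolding additive_def by blast
lemma C2_0: "(\<lambda>_. 0) \<in> C2" using C2_add unfolding additive_def by blast
lemma C2_vadd: "x \<in> C2 \<Longrightarrow> y \<in> C2 \<Longrightarrow> vadd x y \<in> C2" using C2_add unfolding additive_def by blast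
lemma C2_so: "C2 \<subseteq> tdual n2 C2" using inner unfolding stabilizer_code_def self_orthogonal_def by blast
lemma m_le: "m \<le> n2" using inner unfolding stabilizer_code_def by blast
lemma C2_card: "card C2 = 2 ^ (n2 - m)" using inner unfolding stabilizer_code_def by blast
lemma C2_dist: "v \<in> tdual n2 C2 - C2 \<Longrightarrow> d2 \<le> weight n2 v" using inner unfolding stabilizer_code_def by blast

lemma xx: "(x::'q) + x = 0" using char2_add_self[OF two0q] .
lemma vadd_self: "vadd x x = (\<lambda>_. 0::'q)" unfolding vadd_def by (simp add: xx)

lemma tip_add_left: "tip N (vadd x y) z = tip N x z + tip N y (z::nat \<Rightarrow> 'q)"
  unfolding tip_def vadd_def by (simp add: char2_sq_add[OF two0q] algebra_simps sum.distrib)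
lemma tip_add_right: "tip N z (vadd x y) = tip N z x + tip N z (y::nat \<Rightarrow> 'q)"
  unfolding tip_def vadd_def by (simp add: char2_sq_add[OF two0q] algebra_simps sum.distrib)
lemma tip_sym: "tip N x y = tip N y (x::nat \<Rightarrow> 'q)"
  unfolding tip_def by (simp add: add.commute mult.commute)
lemma tip_zero: "tip N (\<lambda>_. 0) (x::nat \<Rightarrow> 'q) = 0" unfolding tip_def by simp

lemma tdual_vadd: "x \<in> tdual n2 C2 \<Longrightarrow> y \<in> tdual n2 C2 \<Longrightarrow> vadd x y \<in> tdual n2 C2"
  unfolding tdual_def by (auto simp: tip_add_right vecs_vadd)

definition cs :: "(nat \<Rightarrow> 'q) \<Rightarrow> (nat \<Rightarrow> 'q) set" where "cs v = (\<lambda>w. vadd v w) ` C2"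

lemma cs_mem: "v \<in> cs v" unfolding cs_def using C2_0 vadd_0 by (metis image_eqI)

lemma cs_eq: "x \<in> cs v \<Longrightarrow> cs x = cs v"
proof -
  assume "x \<in> cs v"
  then obtain c where c: "c \<in> C2" "x = vadd v c" unfolding cs_def by blast
  show "cs x = cs v"
  proof
    show "cs x \<subseteq> cs v"
    proof
      fix y assume "y \<in> cs x"
      then obtain c' where c': "c' \<in> C2" "y = vadd x c'" unfolding cs_def by blast
      then have "y = vadd v (vadd c c')" using c by (simp add: vadd_assoc)
      then show "y \<in> cs v" unfolding cs_def using C2_vadd c c' by blast
    qed
  next
    show "cs v \<subseteq> cs x"
    proof
      fix y assume "y \<in> cs v"
      then obtain c' where c': "c' \<in> C2" "y = vadd v c'" unfolding cs_def by blast
      have "v = vadd x c" using c by (simp add: vadd_assoc vadd_self vadd_0)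
      then have "y = vadd x (vadd c c')" using c' by (simp add: vadd_assoc)
      then show "y \<in> cs x" unfolding cs_def using C2_vadd c c' by blast
    qed
  qed
qed

lemma rho_cs: "u \<in> vecs m \<Longrightarrow> \<exists>v\<in>tdual n2 C2. \<rho> u = cs v"
  using rho_bij unfolding bij_betw_def cosets_quot_def cs_def by blast

lemma tdual_vecs: "tdual n2 C2 \<subseteq> vecs n2" unfolding tdual_def by auto

lemma cs_sub: "v \<in> tdual n2 C2 \<Longrightarrow> cs v \<subseteq> tdual n2 C2"
  unfolding cs_def using C2_so tdual_vadd by blast

lemma rho_sub: "u \<in> vecs m \<Longrightarrow> x \<in> \<rho> u \<Longrightarrow> x \<in> tdual n2 C2"
  using rho_cs cs_sub by blast

lemma rho_vecs: "u \<in> vecs m \<Longrightarrow> x \<in> \<rho> u \<Longrightarrow> x \<in> vecs n2"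
  using rho_sub tdual_vecs by blast

lemma rho_ne: "u \<in> vecs m \<Longrightarrow> \<exists>x. x \<in> \<rho> u"
  using rho_cs cs_mem by blast

lemma rho_eq_cs: "u \<in> vecs m \<Longrightarrow> x \<in> \<rho> u \<Longrightarrow> \<rho> u = cs x"
  using rho_cs cs_eq by metis

lemma zero_vecs: "(\<lambda>_. 0) \<in> vecs N" unfolding vecs_def by simp

lemma cs_C2: "c \<in> C2 \<Longrightarrow> cs c = C2"
proof -
  assume c: "c \<in> C2"
  have "cs (\<lambda>_. 0) = C2" unfolding cs_def by (simp add: vadd_0)
  moreover have "c \<in> cs (\<lambda>_. 0)" using c unfolding cs_def by (simp add: vadd_0)
  ultimately show ?thesis using cs_eq by metis
qed

lemma rho_zero: "\<rho> (\<lambda>_. 0) = C2"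
proof -
  obtain x where x: "x \<in> \<rho> (\<lambda>_. 0)" using rho_ne zero_vecs by blast
  have "\<rho> (vadd (\<lambda>_. 0) (\<lambda>_. 0)) = coset_add (\<rho> (\<lambda>_. 0)) (\<rho> (\<lambda>_. 0))"
    using rho_add zero_vecs by blast
  then have e: "\<rho> (\<lambda>_. 0) = coset_add (\<rho> (\<lambda>_. 0)) (\<rho> (\<lambda>_. 0))" by (simp add: vadd_0)
  have "vadd x x \<in> \<rho> (\<lambda>_. 0)" using x e unfolding coset_add_def by blast
  then have z: "(\<lambda>_. 0) \<in> cs x" using rho_eq_cs[OF zero_vecs x] vadd_self by simp
  then obtain c where c: "c \<in> C2" "(\<lambda>_. 0) = vadd x c" unfolding cs_def by blast
  have "x = c"
  proof
    fix i
    have "0 = x i + c i" using fun_cong[OF c(2), of i] by (simp add: vadd_def)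
    then show "x i = c i" using xx[of "c i"] by (metis add_right_cancel)
  qed
  then show ?thesis using rho_eq_cs[OF zero_vecs x] cs_C2 c by simp
qed

lemma rho_unique: "u \<in> vecs m \<Longrightarrow> u' \<in> vecs m \<Longrightarrow> x \<in> \<rho> u \<Longrightarrow> x \<in> \<rho> u' \<Longrightarrow> u = u'"
proof -
  assume u: "u \<in> vecs m" and u': "u' \<in> vecs m" and x: "x \<in> \<rho> u" "x \<in> \<rho> u'"
  have "\<rho> u = \<rho> u'" using rho_eq_cs u u' x by metis
  then show "u = u'" using rho_bij u u' unfolding bij_betw_def inj_on_def by blast
qed

lemma rho_exists: "x \<in> tdual n2 C2 \<Longrightarrow> \<exists>u\<in>vecs m. x \<in> \<rho> u"
proof -
  assume x: "x \<in> tdual n2 C2"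
  have "cs x \<in> cosets_quot n2 C2" using x unfolding cosets_quot_def cs_def by blast
  then obtain u where "u \<in> vecs m" "\<rho> u = cs x" using rho_bij unfolding bij_betw_def by (metis imageE)
  then show ?thesis using cs_mem by metis
qed

lemma rho_weight: "u \<in> vecs m \<Longrightarrow> u \<noteq> (\<lambda>_. 0) \<Longrightarrow> x \<in> \<rho> u \<Longrightarrow> d2 \<le> weight n2 x"
proof -
  assume u: "u \<in> vecs m" "u \<noteq> (\<lambda>_. 0)" and x: "x \<in> \<rho> u"
  have "x \<notin> C2"
  proof
    assume "x \<in> C2"
    then have "x \<in> \<rho> (\<lambda>_. 0)" using rho_zero by simp
    then show False using rho_unique[OF u(1) zero_vecs x] u(2) by simp
  qed
  then show ?thesis using C2_dist rho_sub[OF u(1) x] by blast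
qed

lemma rho_vadd: "u \<in> vecs m \<Longrightarrow> v \<in> vecs m \<Longrightarrow> x \<in> \<rho> u \<Longrightarrow> y \<in> \<rho> v \<Longrightarrow> vadd x y \<in> \<rho> (vadd u v)"
  using rho_add unfolding coset_add_def by blast

lemma card_cs: "card (cs v) = card C2"
  unfolding cs_def
proof (rule card_image)
  show "inj_on (vadd v) C2"
  proof (rule inj_onI)
    fix x y assume "vadd v x = vadd v y"
    then show "x = y" unfolding vadd_def by (auto simp: fun_eq_iff)
  qed
qed

lemma card_rho: "u \<in> vecs m \<Longrightarrow> card (\<rho> u) = card C2"
  using rho_cs card_cs by metis

end

context innr
begin

definition Sv :: "nat \<Rightarrow> (nat \<Rightarrow> 'q) \<Rightarrow> (nat \<Rightarrow> 'q) set" where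
  "Sv n v = {w \<in> vecs (n*n2). \<forall>i<n. block n2 i w \<in> \<rho> (block m i v)}"

lemma rho_code_UN: "rho_code n m n2 \<rho> D = (\<Union>v\<in>D. Sv n v)"
  unfolding rho_code_def Sv_def by blast

lemma card_Sv: "card (Sv n v) = card C2 ^ n"
proof -
  let ?P = "PiE {..<n} (\<lambda>i. \<rho> (block m i v))"
  let ?f = "\<lambda>w. restrict (\<lambda>i. block n2 i w) {..<n}"
  let ?g = "\<lambda>f. assemble n2 n f"
  have bij: "bij_betw ?f (Sv n v) ?P"
  proof (rule bij_betw_byWitness[where f'="?g"])
    show "\<forall>w\<in>Sv n v. ?g (?f w) = w"
    proof
      fix w assume w: "w \<in> Sv n v"
      show "?g (?f w) = w"
      proof (rule vecs_eq_blocks[OF assemble_vecs])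
        show "w \<in> vecs (n*n2)" using w unfolding Sv_def by blast
        show "\<forall>i<n. block n2 i (?g (?f w)) = block n2 i w"
          by (auto simp: block_assemble block_in_vecs)
      qed
    qed
    show "\<forall>f\<in>?P. ?f (?g f) = f"
    proof
      fix f assume f: "f \<in> ?P"
      show "?f (?g f) = f"
      proof
        fix i
        show "?f (?g f) i = f i"
        proof (cases "i < n")
          case True
          have "f i \<in> vecs n2" using f True rho_vecs[OF block_in_vecs] by (auto simp: PiE_iff)
          then show ?thesis using True by (simp add: block_assemble)
        next
          case False
          then have "f i = undefined" using f by (auto simp: PiE_iff extensional_def)
          then show ?thesis using False by simp
        qed
      qed
    qed
    show "?f ` Sv n v \<subseteq> ?P" unfolding Sv_def by auto
    show "?g ` ?P \<subseteq> Sv n v"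
    proof
      fix w assume "w \<in> ?g ` ?P"
      then obtain f where f: "f \<in> ?P" "w = ?g f" by blast
      have "\<forall>i<n. block n2 i w \<in> \<rho> (block m i v)"
      proof (intro allI impI)
        fix i assume i: "i < n"
        have "f i \<in> \<rho> (block m i v)" using f i by (auto simp: PiE_iff)
        moreover have "f i \<in> vecs n2" using calculation rho_vecs[OF block_in_vecs] by blast
        ultimately show "block n2 i w \<in> \<rho> (block m i v)" using f i by (simp add: block_assemble)
      qed
      then show "w \<in> Sv n v" unfolding Sv_def using f assemble_vecs by blast
    qed
  qed
  have "card (Sv n v) = card ?P" using bij by (rule bij_betw_same_card)
  also have "\<dots> = (\<Prod>i<n. card (\<rho> (block m i v)))" by (simp add: card_PiE)
  also have "\<dots> = card C2 ^ n" by (simp add: card_rho block_in_vecs)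
  finally show ?thesis .
qed

lemma Sv_vecs: "Sv n v \<subseteq> vecs (n*n2)" unfolding Sv_def by blast

lemma Sv_disj:
  assumes v: "v \<in> vecs (n*m)" "v' \<in> vecs (n*m)" and w: "w \<in> Sv n v" "w \<in> Sv n v'"
  shows "v = v'"
proof (rule vecs_eq_blocks[OF v])
  show "\<forall>i<n. block m i v = block m i v'"
    using w rho_unique block_in_vecs unfolding Sv_def by blast
qed

lemma finite_Sv: "finite (Sv n v)"
  by (rule finite_subset[OF Sv_vecs finite_vecs])

lemma card_R:
  assumes D: "D \<subseteq> vecs (n*m)" "finite D"
  shows "card (rho_code n m n2 \<rho> D) = card D * card C2 ^ n"
proof -
  have "card (\<Union>v\<in>D. Sv n v) = (\<Sum>v\<in>D. card (Sv n v))"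
  proof (rule card_UN_disjoint[OF D(2)])
    show "\<forall>i\<in>D. finite (Sv n i)" using finite_Sv by blast
    show "\<forall>i\<in>D. \<forall>j\<in>D. i \<noteq> j \<longrightarrow> Sv n i \<inter> Sv n j = {}"
      using Sv_disj D(1) by blast
  qed
  then show ?thesis unfolding rho_code_UN by (simp add: card_Sv)
qed

lemma Sv_ne: "\<exists>w. w \<in> Sv n v"
proof -
  define f where "f = (\<lambda>i. SOME x. x \<in> \<rho> (block m i v))"
  have fi: "f i \<in> \<rho> (block m i v)" for i
    unfolding f_def using rho_ne[OF block_in_vecs] by (metis someI_ex)
  have "assemble n2 n f \<in> Sv n v"
    unfolding Sv_def using fi rho_vecs[OF block_in_vecs fi] assemble_vecs by (simp add: block_assemble)
  then show ?thesis by blast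
qed

lemma tip_Sv:
  assumes "w \<in> Sv n v" "w' \<in> Sv n v'"
  shows "tip (n*n2) w w' = tip (n*m) v v'"
proof -
  have "tip (n*n2) w w' = (\<Sum>i<n. tip n2 (block n2 i w) (block n2 i w'))" by (rule tip_blocks)
  also have "\<dots> = (\<Sum>i<n. tip m (block m i v) (block m i v'))"
  proof (rule sum.cong[OF refl])
    fix i assume "i \<in> {..<n}"
    then have "block n2 i w \<in> \<rho> (block m i v)" "block n2 i w' \<in> \<rho> (block m i v')"
      using assms unfolding Sv_def by auto
    then show "tip n2 (block n2 i w) (block n2 i w') = tip m (block m i v) (block m i v')"
      using rho_form block_in_vecs by blast
  qed
  also have "\<dots> = tip (n*m) v v'" by (rule tip_blocks[symmetric])
  finally show ?thesis .
qed

lemma weight_Sv: "w \<in> Sv n v \<Longrightarrow> weight (n*n2) w = (\<Sum>i<n. weight n2 (block n2 i w))"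
  by (rule weight_blocks)

end

locale main = Q: quat \<omega> + R: rs m n k \<alpha> + B: bexp m n b + I: innr n2 m d2 C2 \<rho>
  for \<omega> :: "'q::{field,finite}" and m n k :: nat and \<alpha> :: "'f::{field,finite}" and b :: "nat \<Rightarrow> 'f"
    and n2 d2 :: nat and C2 :: "(nat \<Rightarrow> 'q) set" and \<rho>
begin

abbreviation "BR \<equiv> bin_exp n m b (RS_code n k \<alpha>)"
abbreviation "BD \<equiv> bin_exp n m b (std_dual n (RS_code n k \<alpha>))"
abbreviation "CC1 \<equiv> omega_lift \<omega> BR"
abbreviation "CC2 \<equiv> omega_lift \<omega> BD"
abbreviation "R1 \<equiv> rho_code n m n2 \<rho> CC1"
abbreviation "R2 \<equiv> rho_code n m n2 \<rho> CC2"

lemma BD_eq: "BD = {c' \<in> B.BS. \<forall>c\<in>BR. even (bd (n*m) c c')}"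
  by (rule B.bin_exp_dual[OF R.RS_sub_vecs]) (use R.RS_smult in blast)

lemma BR_BS: "BR \<subseteq> B.BS" and BD_BS: "BD \<subseteq> B.BS" by (rule B.bin_exp_BS)+

lemma BR_sub_BD: "BR \<subseteq> BD" by (rule B.bin_exp_mono[OF R.RS_sub_RSD])

lemma F_BR: "(\<lambda>_. False) \<in> BR" by (rule B.bin_exp_zero[OF R.RS_zero])

lemma lift_vecs: "x \<in> B.BS \<Longrightarrow> y \<in> B.BS \<Longrightarrow> Q.lift x y \<in> vecs (n*m)"
  by (rule Q.lift_in_vecs) (auto simp: B.BS_def)

lemma omega_lift_E: "v \<in> omega_lift \<omega> D \<Longrightarrow> \<exists>x y. x \<in> D \<and> y \<in> D \<and> v = Q.lift x y"
  unfolding Q.omega_lift_eq by auto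

lemma lift_in: "x \<in> D \<Longrightarrow> y \<in> D \<Longrightarrow> Q.lift x y \<in> omega_lift \<omega> D"
  unfolding Q.omega_lift_eq by (rule image_eqI[where x="(x,y)"]) auto

lemma CC1_vecs: "CC1 \<subseteq> vecs (n*m)"
proof
  fix v assume "v \<in> CC1"
  then obtain x y where "x \<in> BR" "y \<in> BR" "v = Q.lift x y" using omega_lift_E by metis
  then show "v \<in> vecs (n*m)" using lift_vecs BR_BS by (metis subsetD)
qed
lemma CC2_vecs: "CC2 \<subseteq> vecs (n*m)"
proof
  fix v assume "v \<in> CC2"
  then obtain x y where "x \<in> BD" "y \<in> BD" "v = Q.lift x y" using omega_lift_E by metis
  then show "v \<in> vecs (n*m)" using lift_vecs BD_BS by (metis subsetD)
qed

lemma zero_lift: "Q.lift (\<lambda>_. False) (\<lambda>_. False) = (\<lambda>_. 0)"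
  by (simp add: Q.lift_zero_iff)

lemma zero_CC1: "(\<lambda>_. 0) \<in> CC1" using lift_in[OF F_BR F_BR] zero_lift by metis

lemma card_BR: "card BR = 2 ^ (m*k)"
  using B.card_bin_exp[OF R.RS_sub_vecs] R.card_RS by simp
lemma card_BD: "card BD = 2 ^ (m*(n-k))"
  using B.card_bin_exp[OF R.RSD_sub_vecs] R.card_RSD by simp
lemma finite_BR: "finite BR" using card_BR by (metis card_eq_0_iff power_not_zero zero_neq_numeral)
lemma finite_BD: "finite BD" using card_BD by (metis card_eq_0_iff power_not_zero zero_neq_numeral)

lemma card_CC1: "card CC1 = 2 ^ (2*m*k)"
  using Q.card_omega_lift[OF finite_BR] card_BR by (simp add: power_add[symmetric] mult_2 add_mult_distrib)
lemma card_CC2: "card CC2 = 2 ^ (2*m*(n-k))"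
  using Q.card_omega_lift[OF finite_BD] card_BD by (simp add: power_add[symmetric] mult_2 add_mult_distrib)

lemma finite_CC1: "finite CC1" by (rule finite_subset[OF CC1_vecs finite_vecs])
lemma finite_CC2: "finite CC2" by (rule finite_subset[OF CC2_vecs finite_vecs])

lemma nk2: "2*k \<le> n" using R.nk by simp

lemma card_R1: "card R1 = 2 ^ (n*n2 - m*(n - 2*k))"
proof -
  have "card R1 = 2 ^ (2*m*k) * (2 ^ (n2 - m)) ^ n"
    using I.card_R[OF CC1_vecs finite_CC1] card_CC1 I.C2_card by simp
  also have "\<dots> = 2 ^ (2*m*k + n*(n2 - m))" by (simp add: power_add power_mult[symmetric] mult.commute)
  also have "2*m*k + n*(n2 - m) = n*n2 - m*(n - 2*k)"
  proof -
    obtain a where a: "n2 = m + a" using I.m_le le_Suc_ex by blast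
    obtain c where c: "n = 2*k + c" using nk2 le_Suc_ex by blast
    show ?thesis unfolding a c by (simp add: algebra_simps)
  qed
  finally show ?thesis .
qed

lemma card_R2: "card R2 = 2 ^ (n*n2 + m*(n - 2*k))"
proof -
  have "card R2 = 2 ^ (2*m*(n-k)) * (2 ^ (n2 - m)) ^ n"
    using I.card_R[OF CC2_vecs finite_CC2] card_CC2 I.C2_card by simp
  also have "\<dots> = 2 ^ (2*m*(n-k) + n*(n2 - m))" by (simp add: power_add power_mult[symmetric] mult.commute)
  also have "2*m*(n-k) + n*(n2 - m) = n*n2 + m*(n - 2*k)"
  proof -
    obtain a where a: "n2 = m + a" using I.m_le le_Suc_ex by blast
    obtain c where c: "n = 2*k + c" using nk2 le_Suc_ex by blast
    have nk': "n - k = k + c" using c by simp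
    have nk'': "n - 2*k = c" using c by simp
    show ?thesis unfolding nk' nk'' unfolding a c by (simp add: algebra_simps)
  qed
  finally show ?thesis .
qed
end

context main
begin

lemma two0q: "(1::'q) + 1 = 0" by (rule Q.two0)

lemma R_intro: "v \<in> D \<Longrightarrow> w \<in> I.Sv n v \<Longrightarrow> w \<in> rho_code n m n2 \<rho> D"
  unfolding I.rho_code_UN by blast

lemma R_elim: "w \<in> rho_code n m n2 \<rho> D \<Longrightarrow> \<exists>v\<in>D. w \<in> I.Sv n v"
  unfolding I.rho_code_UN by blast

lemma tip_lifts0:
  assumes "x \<in> BR" "y \<in> BR" "x' \<in> BD" "y' \<in> BD"
  shows "tip (n*m) (Q.lift x y) (Q.lift x' y') = 0"
proof -
  have "even (bd (n*m) x y')" "even (bd (n*m) y x')" using assms BD_eq by auto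
  then have "even (bd (n*m) x y' + bd (n*m) y x')" by simp
  then have "(of_nat (bd (n*m) x y' + bd (n*m) y x') :: 'q) = 0" using char2_of_nat[OF two0q] by blast
  then show ?thesis by (simp add: Q.tip_lift)
qed

lemma tip_CC: "v' \<in> CC1 \<Longrightarrow> v \<in> CC2 \<Longrightarrow> tip (n*m) v' v = 0"
  using omega_lift_E tip_lifts0 by metis

lemma R2_sub_tdual: "R2 \<subseteq> tdual (n*n2) R1"
proof
  fix w assume w: "w \<in> R2"
  then obtain v where v: "v \<in> CC2" "w \<in> I.Sv n v" using R_elim by blast
  have "\<forall>w'\<in>R1. tip (n*n2) w' w = 0"
  proof
    fix w' assume "w' \<in> R1"
    then obtain v' where v': "v' \<in> CC1" "w' \<in> I.Sv n v'" using R_elim by blast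
    have "tip (n*n2) w' w = tip (n*m) v' v" by (rule I.tip_Sv[OF v'(2) v(2)])
    also have "\<dots> = 0" using tip_CC v'(1) v(1) by blast
    finally show "tip (n*n2) w' w = 0" .
  qed
  moreover have "w \<in> vecs (n*n2)" using v(2) I.Sv_vecs by blast
  ultimately show "w \<in> tdual (n*n2) R1" unfolding tdual_def by blast
qed

lemma zero_Sv: "(\<lambda>_. 0) \<in> I.Sv n (\<lambda>_. 0)"
  unfolding I.Sv_def using I.rho_zero I.C2_0 by (simp add: block_zero I.zero_vecs)

lemma zero_R1: "(\<lambda>_. 0) \<in> R1" using R_intro[OF zero_CC1 zero_Sv] .

lemma tdual_block:
  assumes w: "w \<in> tdual (n*n2) R1" and i: "i < n"
  shows "block n2 i w \<in> tdual n2 C2"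
proof -
  have "\<forall>c\<in>C2. tip n2 c (block n2 i w) = 0"
  proof
    fix c assume c: "c \<in> C2"
    define f where "f = (\<lambda>j. if j = i then c else (\<lambda>_. 0::'q))"
    have fv: "f j \<in> vecs n2" for j unfolding f_def using c I.C2_vecs I.zero_vecs by auto
    have fC: "f j \<in> C2" for j unfolding f_def using c I.C2_0 by auto
    let ?w' = "assemble n2 n f"
    have "?w' \<in> I.Sv n (\<lambda>_. 0)"
      unfolding I.Sv_def using assemble_vecs fC fv by (simp add: block_assemble block_zero I.rho_zero)
    then have "?w' \<in> R1" using R_intro[OF zero_CC1] by blast
    then have "tip (n*n2) ?w' w = 0" using w unfolding tdual_def by blast
    moreover have "tip (n*n2) ?w' w = (\<Sum>j<n. tip n2 (block n2 j ?w') (block n2 j w))" by (rule tip_blocks)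
    moreover have "\<dots> = (\<Sum>j<n. if j = i then tip n2 c (block n2 i w) else 0)"
    proof (rule sum.cong[OF refl])
      fix j assume "j \<in> {..<n}"
      then have "block n2 j ?w' = f j" using fv block_assemble by blast
      then show "tip n2 (block n2 j ?w') (block n2 j w) = (if j = i then tip n2 c (block n2 i w) else 0)"
        by (simp add: f_def I.tip_zero)
    qed
    moreover have "\<dots> = tip n2 c (block n2 i w)" using i by (subst sum.delta) auto
    ultimately show "tip n2 c (block n2 i w) = 0" by simp
  qed
  then show ?thesis unfolding tdual_def using block_in_vecs by blast
qed

lemma lift_F_tip: "tip (n*m) (Q.lift c (\<lambda>_. False)) (Q.lift x y) = of_nat (bd (n*m) c y)"
  by (simp add: Q.tip_lift bd_def)

lemma lift_F_tip2: "tip (n*m) (Q.lift (\<lambda>_. False) c) (Q.lift x y) = of_nat (bd (n*m) c x)"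
  by (simp add: Q.tip_lift bd_def)

lemma tdual_sub_R2: "tdual (n*n2) R1 \<subseteq> R2"
proof
  fix w assume w: "w \<in> tdual (n*n2) R1"
  have "\<forall>i. \<exists>u. i < n \<longrightarrow> u \<in> vecs m \<and> block n2 i w \<in> \<rho> u"
    using tdual_block[OF w] I.rho_exists by blast
  then obtain u where u: "\<And>i. i < n \<Longrightarrow> u i \<in> vecs m \<and> block n2 i w \<in> \<rho> (u i)" by metis
  define v where "v = assemble m n u"
  have bv: "block m i v = u i" if "i < n" for i
    unfolding v_def using that u by (simp add: block_assemble)
  have wv: "w \<in> vecs (n*n2)" using w unfolding tdual_def by blast
  have wS: "w \<in> I.Sv n v" unfolding I.Sv_def using wv u bv by simp
  have vv: "v \<in> vecs (n*m)" unfolding v_def by (rule assemble_vecs)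
  obtain x y where xy: "v = Q.lift x y" "\<forall>p\<ge>n*m. \<not> x p \<and> \<not> y p" using Q.lift_dec[OF vv] by blast
  have xB: "x \<in> B.BS" "y \<in> B.BS" using xy(2) unfolding B.BS_def by auto
  have orth: "tip (n*m) v' v = 0" if v': "v' \<in> CC1" for v'
  proof -
    obtain w' where "w' \<in> I.Sv n v'" using I.Sv_ne by blast
    moreover then have "w' \<in> R1" using R_intro v' by blast
    ultimately have "tip (n*n2) w' w = tip (n*m) v' v" using I.tip_Sv wS by blast
    moreover have "tip (n*n2) w' w = 0" using w \<open>w' \<in> R1\<close> unfolding tdual_def by blast
    ultimately show ?thesis by simp
  qed
  have "\<forall>c\<in>BR. even (bd (n*m) c y)"
  proof
    fix c assume c: "c \<in> BR"
    have "Q.lift c (\<lambda>_. False) \<in> CC1" using lift_in[OF c F_BR] .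
    then have "(of_nat (bd (n*m) c y) :: 'q) = 0" using orth lift_F_tip xy(1) by metis
    then show "even (bd (n*m) c y)" using char2_of_nat[OF two0q] by blast
  qed
  then have yD: "y \<in> BD" using BD_eq xB by blast
  have "\<forall>c\<in>BR. even (bd (n*m) c x)"
  proof
    fix c assume c: "c \<in> BR"
    have "Q.lift (\<lambda>_. False) c \<in> CC1" using lift_in[OF F_BR c] .
    then have "(of_nat (bd (n*m) c x) :: 'q) = 0" using orth lift_F_tip2 xy(1) by metis
    then show "even (bd (n*m) c x)" using char2_of_nat[OF two0q] by blast
  qed
  then have xD: "x \<in> BD" using BD_eq xB by blast
  have "v \<in> CC2" using lift_in[OF xD yD] xy(1) by simp
  then show "w \<in> R2" using R_intro wS by blast
qed

lemma tdual_R1: "tdual (n*n2) R1 = R2"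
  using tdual_sub_R2 R2_sub_tdual by blast

end

context main
begin

lemma BR_xor: "x \<in> BR \<Longrightarrow> y \<in> BR \<Longrightarrow> (\<lambda>p. x p \<noteq> y p) \<in> BR"
  by (rule B.bin_exp_xor) (use R.RS_add in auto)

lemma CC1_vadd: "v1 \<in> CC1 \<Longrightarrow> v2 \<in> CC1 \<Longrightarrow> vadd v1 v2 \<in> CC1"
proof -
  assume "v1 \<in> CC1" "v2 \<in> CC1"
  then obtain x1 y1 x2 y2 where h: "x1 \<in> BR" "y1 \<in> BR" "v1 = Q.lift x1 y1" "x2 \<in> BR" "y2 \<in> BR" "v2 = Q.lift x2 y2"
    using omega_lift_E by metis
  have "vadd v1 v2 = Q.lift (\<lambda>p. x1 p \<noteq> x2 p) (\<lambda>p. y1 p \<noteq> y2 p)" using h by (simp add: Q.lift_vadd)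
  moreover have "Q.lift (\<lambda>p. x1 p \<noteq> x2 p) (\<lambda>p. y1 p \<noteq> y2 p) \<in> CC1"
    by (rule lift_in) (use h BR_xor in auto)
  ultimately show ?thesis by simp
qed

lemma Sv_vadd: "w1 \<in> I.Sv n v1 \<Longrightarrow> w2 \<in> I.Sv n v2 \<Longrightarrow> vadd w1 w2 \<in> I.Sv n (vadd v1 v2)"
proof -
  assume w1: "w1 \<in> I.Sv n v1" and w2: "w2 \<in> I.Sv n v2"
  have "vadd w1 w2 \<in> vecs (n*n2)" using w1 w2 unfolding I.Sv_def by (auto intro: vecs_vadd)
  moreover have "block n2 i (vadd w1 w2) \<in> \<rho> (block m i (vadd v1 v2))" if i: "i < n" for i
  proof -
    have "block n2 i w1 \<in> \<rho> (block m i v1)" "block n2 i w2 \<in> \<rho> (block m i v2)"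
      using w1 w2 i unfolding I.Sv_def by auto
    then have "vadd (block n2 i w1) (block n2 i w2) \<in> \<rho> (vadd (block m i v1) (block m i v2))"
      by (rule I.rho_vadd[OF block_in_vecs block_in_vecs])
    then show ?thesis by (simp add: block_vadd)
  qed
  ultimately show ?thesis unfolding I.Sv_def by blast
qed

lemma R1_vadd: "w1 \<in> R1 \<Longrightarrow> w2 \<in> R1 \<Longrightarrow> vadd w1 w2 \<in> R1"
proof -
  assume "w1 \<in> R1" "w2 \<in> R1"
  then obtain v1 v2 where h: "v1 \<in> CC1" "w1 \<in> I.Sv n v1" "v2 \<in> CC1" "w2 \<in> I.Sv n v2" using R_elim by metis
  have "vadd w1 w2 \<in> I.Sv n (vadd v1 v2)" by (rule Sv_vadd[OF h(2) h(4)])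
  moreover have "vadd v1 v2 \<in> CC1" by (rule CC1_vadd[OF h(1) h(3)])
  ultimately show ?thesis by (rule R_intro[rotated])
qed

lemma R1_vecs: "R1 \<subseteq> vecs (n*n2)" unfolding rho_code_def by blast
lemma R2_vecs: "R2 \<subseteq> vecs (n*n2)" unfolding rho_code_def by blast

lemma R1_additive: "additive (n*n2) R1"
  unfolding additive_def using R1_vecs zero_R1 R1_vadd by blast

lemma CC1_sub_CC2: "CC1 \<subseteq> CC2"
proof
  fix v assume "v \<in> CC1"
  then obtain x y where h: "x \<in> BR" "y \<in> BR" "v = Q.lift x y" using omega_lift_E by metis
  then have "x \<in> BD" "y \<in> BD" using BR_sub_BD by auto
  then show "v \<in> CC2" using h(3) lift_in by simp
qed

lemma R1_sub_R2: "R1 \<subseteq> R2"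
  unfolding rho_code_def using CC1_sub_CC2 by blast

lemma R1_so: "self_orthogonal (n*n2) R1"
  unfolding self_orthogonal_def tdual_R1 by (rule R1_sub_R2)

lemma weight_aux:
  assumes z: "z \<in> BD" "z \<noteq> (\<lambda>_. False)" and zv: "\<forall>p. z p \<longrightarrow> v p \<noteq> 0" and w: "w \<in> I.Sv n v"
  shows "d2 * (k + 1) \<le> weight (n*n2) w"
proof -
  have zB: "z \<in> B.BS" "B.fv z \<in> std_dual n (RS_code n k \<alpha>)" using z(1) unfolding B.bin_exp_eq by auto
  have FB: "(\<lambda>_. False) \<in> B.BS" unfolding B.BS_def by simp
  have fvF: "B.fv (\<lambda>_. False) = (\<lambda>_. 0)" unfolding B.fv_def by simp
  have "B.fv z \<noteq> (\<lambda>_. 0)"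
  proof
    assume "B.fv z = (\<lambda>_. 0)"
    then have "B.fv z = B.fv (\<lambda>_. False)" using fvF by simp
    then show False using B.fv_inj zB(1) FB z(2) unfolding inj_on_def by blast
  qed
  then have cI: "k + 1 \<le> card {i. i < n \<and> B.fv z i \<noteq> 0}" using R.weight_RSD zB(2) by blast
  let ?I = "{i. i < n \<and> B.fv z i \<noteq> 0}"
  have wi: "d2 \<le> weight n2 (block n2 i w)" if i: "i \<in> ?I" for i
  proof -
    have "\<exists>j<m. z (i*m+j)"
    proof (rule ccontr)
      assume "\<not> (\<exists>j<m. z (i*m+j))"
      then have "B.fv z i = 0" unfolding B.fv_def by simp
      then show False using i by simp
    qed
    then obtain j where j: "j < m" "z (i*m+j)" by blast
    then have "block m i v j \<noteq> 0" using zv unfolding block_def by simp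
    then have "block m i v \<noteq> (\<lambda>_. 0)" by (metis)
    moreover have "block n2 i w \<in> \<rho> (block m i v)" using w i unfolding I.Sv_def by simp
    ultimately show ?thesis using I.rho_weight block_in_vecs by blast
  qed
  have "d2 * (k+1) \<le> d2 * card ?I" using cI by (rule mult_le_mono2)
  also have "\<dots> = (\<Sum>i\<in>?I. d2)" by simp
  also have "\<dots> \<le> (\<Sum>i\<in>?I. weight n2 (block n2 i w))" by (rule sum_mono) (use wi in blast)
  also have "\<dots> \<le> (\<Sum>i<n. weight n2 (block n2 i w))" by (rule sum_mono2) auto
  also have "\<dots> = weight (n*n2) w" by (rule weight_blocks[symmetric])
  finally show ?thesis .
qed

lemma weight_R2: "w \<in> R2 - R1 \<Longrightarrow> d2 * (k + 1) \<le> weight (n*n2) w"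
proof -
  assume w: "w \<in> R2 - R1"
  then obtain v where v: "v \<in> CC2" "w \<in> I.Sv n v" using R_elim by blast
  have "v \<noteq> (\<lambda>_. 0)" using w v R_intro[OF zero_CC1] by blast
  obtain x y where xy: "x \<in> BD" "y \<in> BD" "v = Q.lift x y" using omega_lift_E v(1) by metis
  have ne: "x \<noteq> (\<lambda>_. False) \<or> y \<noteq> (\<lambda>_. False)" using \<open>v \<noteq> (\<lambda>_. 0)\<close> xy(3) zero_lift by auto
  have vx: "\<forall>p. x p \<longrightarrow> v p \<noteq> 0" and vy: "\<forall>p. y p \<longrightarrow> v p \<noteq> 0"
    using xy(3) unfolding Q.lift_def by (auto simp: Q.lv_zero)
  show ?thesis using ne weight_aux xy vx vy v(2) by metis
qed

lemma n_pos: "n > 0" using R.k_lt_n by simp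
lemma n2_pos: "n2 > 0" using I.m_le R.m2 by simp

lemma main_result:
  shows "additive (n * n2) R1
    \<and> self_orthogonal (n * n2) R1
    \<and> tdual (n * n2) R1 = R2
    \<and> card R1 = 2 ^ (n * n2 - m * (n - 2 * k))
    \<and> card R2 = 2 ^ (n * n2 + m * (n - 2 * k))
    \<and> stabilizer_code (n * n2) (m * (n - 2 * k)) (d2 * (k + 1)) R1
    \<and> real (m * (n - 2 * k)) / real (n * n2) = (real m / real n2) * (1 - 2 * (real k / real n))
    \<and> (\<forall>v \<in> R2 - R1. d2 * (k + 1) \<le> weight (n * n2) v)
    \<and> rel_min_dist (n * n2) R1 \<ge> real d2 / real n2 * (real k / real n)
    \<and> (real d2 / real n2 \<ge> H4_inv ((1 - real m / real n2) / 2) \<longrightarrow>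
         rel_min_dist (n * n2) R1 \<ge> (real k / real n) * H4_inv ((1 - real m / real n2) / 2))"
proof -
  have KN: "m * (n - 2 * k) \<le> n * n2"
  proof -
    have "m * (n - 2*k) \<le> n2 * n" using I.m_le by (intro mult_le_mono) auto
    then show ?thesis by (simp add: mult.commute)
  qed
  have stab: "stabilizer_code (n * n2) (m * (n - 2 * k)) (d2 * (k + 1)) R1"
    unfolding stabilizer_code_def using R1_additive R1_so KN card_R1 weight_R2 tdual_R1 by simp
  have rate: "real (m * (n - 2 * k)) / real (n * n2) = (real m / real n2) * (1 - 2 * (real k / real n))"
  proof -
    have "real (n - 2*k) = real n - 2 * real k" using nk2 by (simp add: of_nat_diff)
    then show ?thesis using n_pos n2_pos by (simp add: field_simps)
  qed
  have fin2: "finite R2" by (rule finite_subset[OF R2_vecs finite_vecs])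
  have fin1: "finite R1" by (rule finite_subset[OF R1_vecs finite_vecs])
  have ne: "R2 - R1 \<noteq> {}"
  proof
    assume "R2 - R1 = {}"
    then have "card R2 \<le> card R1" using fin1 by (intro card_mono) auto
    moreover have "m * (n - 2*k) > 0" using R.m2 R.nk by simp
    then have "n * n2 - m * (n - 2 * k) < n * n2 + m * (n - 2 * k)" by linarith
    then have "(2::nat) ^ (n * n2 - m * (n - 2 * k)) < 2 ^ (n * n2 + m * (n - 2 * k))"
      by (rule power_strict_increasing) simp
    ultimately show False using card_R1 card_R2 by simp
  qed
  have md: "d2 * (k + 1) \<le> min_dist (n*n2) R1"
    unfolding min_dist_def tdual_R1 using fin2 ne weight_R2 by (subst Min_ge_iff) auto
  have rmd: "rel_min_dist (n * n2) R1 \<ge> real d2 / real n2 * (real k / real n)"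
  proof -
    have "real d2 / real n2 * (real k / real n) = real (d2*k) / real (n*n2)" by (simp add: field_simps)
    also have "\<dots> \<le> real (d2*(k+1)) / real (n*n2)" by (intro divide_right_mono) auto
    also have "\<dots> \<le> real (min_dist (n*n2) R1) / real (n*n2)"
    proof (rule divide_right_mono)
      show "real (d2*(k+1)) \<le> real (min_dist (n*n2) R1)" using md by (simp only: of_nat_le_iff)
    qed simp
    finally show ?thesis unfolding rel_min_dist_def .
  qed
  have h4: "real d2 / real n2 \<ge> H4_inv ((1 - real m / real n2) / 2) \<longrightarrow>
         rel_min_dist (n * n2) R1 \<ge> (real k / real n) * H4_inv ((1 - real m / real n2) / 2)"
  proof
    assume h: "real d2 / real n2 \<ge> H4_inv ((1 - real m / real n2) / 2)"
    have "(real k / real n) * H4_inv ((1 - real m / real n2) / 2) \<le> (real k / real n) * (real d2 / real n2)"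
      using h by (intro mult_left_mono) auto
    also have "\<dots> \<le> rel_min_dist (n * n2) R1" using rmd by (simp add: mult.commute)
    finally show "rel_min_dist (n * n2) R1 \<ge> (real k / real n) * H4_inv ((1 - real m / real n2) / 2)" .
  qed
  show ?thesis using R1_additive R1_so tdual_R1 card_R1 card_R2 stab rate weight_R2 rmd h4 by blast
qed

end

theorem lemma3:
  fixes m n k n2 d2 :: nat
    and \<alpha> :: "'f::{field,finite}"
    and b :: "nat \<Rightarrow> 'f"
    and \<omega> :: "'q::{field,finite}"
    and C2 :: "(nat \<Rightarrow> 'q) set"
    and \<rho> :: "(nat \<Rightarrow> 'q) \<Rightarrow> (nat \<Rightarrow> 'q) set"
  assumes q4: "card (UNIV :: 'q set) = 4"
    and omega: "\<omega>^2 = \<omega> + 1"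
    and m2: "m \<ge> 2"
    and fcard: "card (UNIV :: 'f set) = 2 ^ m"
    and n_def: "n = 2 ^ m - 1"
    and k_lo: "1 \<le> k" and k_hi: "k \<le> 2 ^ (m - 1) - 1"
    and prim: "primitive_elem \<alpha>"
    and sdb: "self_dual_basis m b"
    and inner: "stabilizer_code n2 m d2 C2"
    and rho_bij: "bij_betw \<rho> (vecs m) (cosets_quot n2 C2)"
    and rho_add: "\<forall>u\<in>vecs m. \<forall>v\<in>vecs m. \<rho> (vadd u v) = coset_add (\<rho> u) (\<rho> v)"
    and rho_form: "\<forall>u\<in>vecs m. \<forall>v\<in>vecs m. \<forall>x\<in>\<rho> u. \<forall>y\<in>\<rho> v. tip n2 x y = tip m u v"
  defines "C1 \<equiv> omega_lift \<omega> (bin_exp n m b (RS_code n k \<alpha>))"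
    and "C1perp \<equiv> omega_lift \<omega> (bin_exp n m b (std_dual n (RS_code n k \<alpha>)))"
    and "r \<equiv> real m / real n2"
    and "r' \<equiv> real k / real n"
  shows "additive (n * n2) (rho_code n m n2 \<rho> C1)
    \<and> self_orthogonal (n * n2) (rho_code n m n2 \<rho> C1)
    \<and> tdual (n * n2) (rho_code n m n2 \<rho> C1) = rho_code n m n2 \<rho> C1perp
    \<and> card (rho_code n m n2 \<rho> C1) = 2 ^ (n * n2 - m * (n - 2 * k))
    \<and> card (rho_code n m n2 \<rho> C1perp) = 2 ^ (n * n2 + m * (n - 2 * k))
    \<and> stabilizer_code (n * n2) (m * (n - 2 * k)) (d2 * (k + 1)) (rho_code n m n2 \<rho> C1)
    \<and> real (m * (n - 2 * k)) / real (n * n2) = r * (1 - 2 * r')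
    \<and> (\<forall>v \<in> rho_code n m n2 \<rho> C1perp - rho_code n m n2 \<rho> C1. d2 * (k + 1) \<le> weight (n * n2) v)
    \<and> rel_min_dist (n * n2) (rho_code n m n2 \<rho> C1) \<ge> real d2 / real n2 * r'
    \<and> (real d2 / real n2 \<ge> H4_inv ((1 - r) / 2) \<longrightarrow>
         rel_min_dist (n * n2) (rho_code n m n2 \<rho> C1) \<ge> r' * H4_inv ((1 - r) / 2))"
proof -
  have c4: "card (UNIV :: 'q set) = 2^2" using q4 by simp
  have two0: "(1::'q) + 1 = 0" using char2_of_card[OF c4] by simp
  interpret main \<omega> m n k \<alpha> b n2 d2 C2 \<rho>
    by unfold_locales (use q4 omega m2 fcard n_def k_lo k_hi prim sdb inner rho_bij rho_add rho_form two0 in auto)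
  show ?thesis using main_result unfolding assms(14-17) by simp
qed

end
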